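(* Let $M$ be a real symmetric $n\times n$ matrix with eigenvalues $\lambda_1\le\lambda_2\le\cdots\le\lambda_n$ (listed with multiplicity), and let $\Gamma=(G,\sigma)$, $G=(V,E)$, be its induced signed graph. Fix $k\in\{1,\dots,n\}$ and let $f_k$ be an eigenfunction with $Mf_k=\lambda_kf_k$. Then $$\mathfrak{S}(f_k)\le k+r-1\quad\text{and}\quad \mathfrak{W}(f_k)\le k+c-1,$$ where $r$ is the multiplicity of $\lambda_k$ and $c$ is the number of connected components of $G$. In particular, if $G$ is connected then $\mathfrak{W}(f_k)\le k$. If moreover $f_k$ has minimal support, then $\mathfrak{S}(f_k)\le k$.
   Context: All graphs are finite, simple and undirected. A signed graph $\Gamma=(G,\sigma)$ is a graph $G=(V,E)$ with a signature $\sigma:E\to\{+1,-1\}$; write $\sigma_{xy}=\sigma(\{x,y\})$ and $x\sim y$ if $\{x,y\}\in E$. The induced signed graph of a real symmetric $n\times n$ matrix $M=(M_{ij})$ has vertex set $V=\{x_1,\dots,x_n\}$, edge $\{x_i,x_j\}$ iff $i\ne j$ and $M_{ij}\neq0$, and sign $\sigma_{x_ix_j}=-M_{ij}/|M_{ij}|$. Functions $V\to\mathbb R$ are identified with vectors in $\mathbb R^n$; an eigenfunction is a nonzero eigenvector. An eigenfunction $f$ has minimal support if every eigenfunction $g$ for the same eigenvalue with $\mathrm{supp}(g)\subseteq\mathrm{supp}(f)$ satisfies $\mathrm{supp}(g)=\mathrm{supp}(f)$, where $\mathrm{supp}(f)=\{x: f(x)\ne0\}$. A walk is a sequence of vertices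 $y_1,\dots,y_m$ ($m\ge2$) with $y_j\sim y_{j+1}$ for all $j$. For $f:V\to\mathbb R$ let $\Omega=\{x\in V: f(x)\ne0\}$. An S-walk of $f$ is a walk with $f(y_j)\sigma_{y_jy_{j+1}}f(y_{j+1})>0$ for all $j$. A W-walk of $f$ is a walk such that for any two consecutive nonzeros $y_i,y_j$ ($i<j$, $f(y_i)\ne0\ne f(y_j)$, $f(y_l)=0$ for $i<l<j$) one has $f(y_i)\sigma_{y_iy_{i+1}}\cdots\sigma_{y_{j-1}y_j}f(y_j)>0$ (so every walk containing at most one nonzero of $f$ is a W-walk). On $\Omega$ define $x R_S y$ (resp. $x R_W y$) iff $x=y$ or some S-walk (resp. W-walk) of $f$ connects $x$ and $y$; these are equivalence relations. The strong nodal domains of $f$ are the induced subgraphs of $G$ on the $R_S$-classes, and $\mathfrak{S}(f)$ is their number. If $W_1,\dots,W_q$ are the $R_W$-classes, the weak nodal domains of $f$ are the induced subgraphs on $W_i^0=W_i\cup\{x\in V:\text{there is a W-walk of } f \text{ from } x \text{ to some vertex of } W_i\}$, and $\mathfrak{W}(f)=q$. *)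

theory Defs
  imports "HOL-Analysis.Analysis"
begin

definition adj :: "real^'n^'n \<Rightarrow> 'n \<Rightarrow> 'n \<Rightarrow> bool" where
  "adj M x y \<longleftrightarrow> x \<noteq> y \<and> M $ x $ y \<noteq> 0"

definition sgn_edge :: "real^'n^'n \<Rightarrow> 'n \<Rightarrow> 'n \<Rightarrow> real" where
  "sgn_edge M x y = - (M $ x $ y / \<bar>M $ x $ y\<bar>)"

definition is_walk :: "real^'n^'n \<Rightarrow> 'n list \<Rightarrow> bool" where
  "is_walk M ys \<longleftrightarrow> length ys \<ge> 2 \<and>
     (\<forall>j. Suc j < length ys \<longrightarrow> adj M (ys ! j) (ys ! Suc j))"

definition S_walk :: "real^'n^'n \<Rightarrow> real^'n \<Rightarrow> 'n list \<Rightarrow> bool" where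
  "S_walk M f ys \<longleftrightarrow> is_walk M ys \<and>
     (\<forall>j. Suc j < length ys \<longrightarrow>
        f $ (ys ! j) * sgn_edge M (ys ! j) (ys ! Suc j) * f $ (ys ! Suc j) > 0)"

definition W_walk :: "real^'n^'n \<Rightarrow> real^'n \<Rightarrow> 'n list \<Rightarrow> bool" where
  "W_walk M f ys \<longleftrightarrow> is_walk M ys \<and>
     (\<forall>i j. i < j \<and> j < length ys \<and> f $ (ys ! i) \<noteq> 0 \<and> f $ (ys ! j) \<noteq> 0 \<and>
        (\<forall>l. i < l \<and> l < j \<longrightarrow> f $ (ys ! l) = 0) \<longrightarrow>
        f $ (ys ! i) * (\<Prod>l\<in>{i..<j}. sgn_edge M (ys ! l) (ys ! Suc l)) * f $ (ys ! j) > 0)"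

definition nz_set :: "real^'n \<Rightarrow> 'n set" where
  "nz_set f = {x. f $ x \<noteq> 0}"

definition walk_rel :: "('n list \<Rightarrow> bool) \<Rightarrow> real^'n \<Rightarrow> ('n \<times> 'n) set" where
  "walk_rel P f = {(x, y). x \<in> nz_set f \<and> y \<in> nz_set f \<and>
     (x = y \<or> (\<exists>ys. P ys \<and> ((hd ys = x \<and> last ys = y) \<or> (hd ys = y \<and> last ys = x))))}"

definition strong_nodal_count :: "real^'n^'n \<Rightarrow> real^'n \<Rightarrow> nat" where
  "strong_nodal_count M f = card (nz_set f // walk_rel (S_walk M f) f)"

definition weak_nodal_count :: "real^'n^'n \<Rightarrow> real^'n \<Rightarrow> nat" where
  "weak_nodal_count M f = card (nz_set f // walk_rel (W_walk M f) f)"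

definition num_components :: "real^'n^'n \<Rightarrow> nat" where
  "num_components M = card ((UNIV :: 'n set) // {(x, y). (adj M)\<^sup>*\<^sup>* x y})"

definition eigenspace :: "real^'n^'n \<Rightarrow> real \<Rightarrow> (real^'n) set" where
  "eigenspace M \<mu> = {v. M *v v = \<mu> *\<^sub>R v}"

definition supp :: "real^'n \<Rightarrow> 'n set" where
  "supp f = {x. f $ x \<noteq> 0}"

definition minimal_support :: "real^'n^'n \<Rightarrow> real \<Rightarrow> real^'n \<Rightarrow> bool" where
  "minimal_support M \<mu> f \<longleftrightarrow>
     (\<forall>g. g \<noteq> 0 \<and> M *v g = \<mu> *\<^sub>R g \<and> supp g \<subseteq> supp f \<longrightarrow> supp g = supp f)"

end

theory Submission
  imports Defs
begin

section \<open>Spectral part\<close>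

lemma symm_inner:
  fixes M :: "real^'n^'n"
  assumes "transpose M = M"
  shows "(M *v x) \<bullet> y = x \<bullet> (M *v y)"
proof -
  have "M *v x = x v* M" using vector_transpose_matrix[of x M] assms by simp
  then show ?thesis by (simp add: dot_lmul_matrix)
qed

lemma subspace_eig: "subspace (eigenspace M \<mu>)"
  unfolding subspace_def eigenspace_def
  by (auto simp: matrix_vector_right_distrib matrix_vector_mult_scaleR scaleR_add_right)

lemma eig_orth:
  fixes M :: "real^'n^'n"
  assumes "transpose M = M" "x \<in> eigenspace M a" "y \<in> eigenspace M b" "a \<noteq> b"
  shows "x \<bullet> y = 0"
proof -
  have "a * (x \<bullet> y) = (M *v x) \<bullet> y" using assms(2) by (simp add: eigenspace_def)
  also have "\<dots> = x \<bullet> (M *v y)" by (rule symm_inner[OF assms(1)])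
  also have "\<dots> = b * (x \<bullet> y)" using assms(3) by (simp add: eigenspace_def)
  finally show ?thesis using assms(4) by simp
qed

definition SP :: "real^'n^'n \<Rightarrow> real set \<Rightarrow> (real^'n) set" where
  "SP M I = span (\<Union>\<mu>\<in>I. eigenspace M \<mu>)"

lemma SP_insert:
  "SP M (insert a I) = {x + y | x y. x \<in> eigenspace M a \<and> y \<in> SP M I}"
proof -
  have "SP M (insert a I) = span (eigenspace M a \<union> (\<Union>\<mu>\<in>I. eigenspace M \<mu>))"
    by (simp add: SP_def)
  also have "\<dots> = {x + y | x y. x \<in> span (eigenspace M a) \<and> y \<in> SP M I}"
    by (simp add: span_Un SP_def)
  moreover have "span (eigenspace M a) = eigenspace M a"
    by (rule span_eq_iff[THEN iffD2, OF subspace_eig])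
  ultimately show ?thesis by simp
qed

lemma orth_SP:
  fixes M :: "real^'n^'n"
  assumes "transpose M = M" "a \<notin> I" "x \<in> eigenspace M a" "y \<in> SP M I"
  shows "x \<bullet> y = 0"
proof -
  have "orthogonal x y"
  proof (rule orthogonal_to_span)
    show "y \<in> span (\<Union>\<mu>\<in>I. eigenspace M \<mu>)" using assms(4) by (simp add: SP_def)
  next
    fix z assume "z \<in> (\<Union>\<mu>\<in>I. eigenspace M \<mu>)"
    then obtain b where b: "b \<in> I" "z \<in> eigenspace M b" by auto
    have "a \<noteq> b" using b(1) assms(2) by auto
    then show "orthogonal x z" using eig_orth[OF assms(1) assms(3) b(2)]
      unfolding orthogonal_def by simp
  qed
  then show ?thesis by (simp add: orthogonal_def)
qed

lemma subspace_SP: "subspace (SP M I)"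
  by (simp add: SP_def)

lemma dim_SP:
  fixes M :: "real^'n^'n"
  assumes "transpose M = M" "finite I"
  shows "dim (SP M I) = (\<Sum>\<mu>\<in>I. dim (eigenspace M \<mu>))"
  using assms(2)
proof (induction I rule: finite_induct)
  case empty
  then show ?case by (simp add: SP_def)
next
  case (insert a I)
  have int: "eigenspace M a \<inter> SP M I = {0}"
  proof -
    have "x = 0" if "x \<in> eigenspace M a" "x \<in> SP M I" for x
      using orth_SP[OF assms(1) insert(2) that] by simp
    moreover have "0 \<in> eigenspace M a \<inter> SP M I"
      using subspace_0[OF subspace_eig] subspace_0[OF subspace_SP] by blast
    ultimately show ?thesis by blast
  qed
  have "dim (SP M (insert a I)) + dim (eigenspace M a \<inter> SP M I)
      = dim (eigenspace M a) + dim (SP M I)"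
    unfolding SP_insert by (rule dim_sums_Int[OF subspace_eig subspace_SP])
  then show ?case using int insert by simp
qed

definition Qf :: "real^'n^'n \<Rightarrow> real \<Rightarrow> real^'n \<Rightarrow> real" where
  "Qf M l g = g \<bullet> (M *v g) - l * (g \<bullet> g)"

lemma Qf_add:
  fixes M :: "real^'n^'n"
  assumes "transpose M = M" "a0 \<notin> I" "a \<in> eigenspace M a0" "b \<in> SP M I"
  shows "Qf M l (a + b) = Qf M l a + Qf M l b"
proof -
  have ab: "a \<bullet> b = 0" by (rule orth_SP[OF assms])
  have Ma: "M *v a = a0 *\<^sub>R a" using assms(3) by (simp add: eigenspace_def)
  have "a \<bullet> (M *v b) = (M *v a) \<bullet> b" using symm_inner[OF assms(1)] by simp
  then have c1: "a \<bullet> (M *v b) = 0" using Ma ab by simp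
  have c2: "b \<bullet> (M *v a) = 0" using Ma ab by (simp add: inner_commute)
  show ?thesis unfolding Qf_def
    using c1 c2 ab by (simp add: matrix_vector_right_distrib inner_add_left inner_add_right inner_commute algebra_simps)
qed

lemma Qf_eig:
  assumes "a \<in> eigenspace M a0"
  shows "Qf M l a = (a0 - l) * (a \<bullet> a)"
  using assms by (simp add: Qf_def eigenspace_def algebra_simps)

lemma Qf_pos:
  fixes M :: "real^'n^'n"
  assumes "transpose M = M" "finite I"
  shows "(\<forall>\<mu>\<in>I. \<mu> > l) \<Longrightarrow> g \<in> SP M I \<Longrightarrow> g \<noteq> 0 \<Longrightarrow> Qf M l g > 0"
  using assms(2)
proof (induction I arbitrary: g rule: finite_induct)
  case empty
  then show ?case by (simp add: SP_def)
next
  case (insert a I)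
  obtain x y where g: "g = x + y" "x \<in> eigenspace M a" "y \<in> SP M I"
    using insert(5) SP_insert by blast
  have Q: "Qf M l g = Qf M l x + Qf M l y"
    using Qf_add[OF assms(1) insert(2) g(2) g(3)] g(1) by simp
  have qx: "Qf M l x = (a - l) * (x \<bullet> x)" by (rule Qf_eig[OF g(2)])
  have al: "a > l" using insert(4) by simp
  have qx0: "Qf M l x \<ge> 0" using qx al by simp
  have qxp: "x \<noteq> 0 \<Longrightarrow> Qf M l x > 0" using qx al by simp
  have qy0: "Qf M l y \<ge> 0"
    using insert(3)[of y] insert(4) g(3) by (cases "y = 0") (auto simp: Qf_def)
  have qyp: "y \<noteq> 0 \<Longrightarrow> Qf M l y > 0"
    using insert(3)[of y] insert(4) g(3) by auto
  show ?case
  proof (cases "x = 0")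
    case True
    then have "y \<noteq> 0" using insert(6) g(1) by simp
    then show ?thesis using Q qx0 qyp by simp
  next
    case False
    then show ?thesis using Q qxp qy0 by simp
  qed
qed

lemma dim_SP_count:
  fixes M :: "real^'n^'n"
  assumes symm: "transpose M = M"
    and mult: "\<And>\<mu>. card {i \<in> {1..CARD('n)}. lam i = \<mu>} = dim (eigenspace M \<mu>)"
  shows "dim (SP M (lam ` {i \<in> {1..CARD('n)}. P (lam i)})) = card {i \<in> {1..CARD('n)}. P (lam i)}"
proof -
  define A where "A = {i \<in> {1..CARD('n)}. P (lam i)}"
  have fA: "finite A" by (simp add: A_def)
  have "dim (SP M (lam ` A)) = (\<Sum>\<mu>\<in>lam ` A. dim (eigenspace M \<mu>))"
    using dim_SP[OF symm] fA by simp
  also have "\<dots> = (\<Sum>\<mu>\<in>lam ` A. card {i \<in> {1..CARD('n)}. lam i = \<mu>})"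
    using mult by simp
  also have "\<dots> = (\<Sum>\<mu>\<in>lam ` A. card {i. i \<in> A \<and> lam i = \<mu>})"
  proof (rule sum.cong)
    fix \<mu> assume "\<mu> \<in> lam ` A"
    then have "P \<mu>" by (auto simp: A_def)
    then have "{i \<in> {1..CARD('n)}. lam i = \<mu>} = {i. i \<in> A \<and> lam i = \<mu>}"
      by (auto simp: A_def)
    then show "card {i \<in> {1..CARD('n)}. lam i = \<mu>} = card {i. i \<in> A \<and> lam i = \<mu>}" by simp
  qed simp
  also have "\<dots> = (\<Sum>\<mu>\<in>lam ` A. \<Sum>i\<in>{i. i \<in> A \<and> lam i = \<mu>}. 1)"
    by simp
  also have "\<dots> = (\<Sum>i\<in>A. 1)"
    using sum.image_gen[OF fA, of "\<lambda>_. (1::nat)" lam] by simp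
  also have "\<dots> = card A" by simp
  finally show ?thesis by (simp add: A_def)
qed

lemma spectral:
  fixes M :: "real^'n^'n" and lam :: "nat \<Rightarrow> real" and k :: nat
  assumes symm: "transpose M = M"
    and sorted0: "\<forall>i j. 1 \<le> i \<longrightarrow> i \<le> j \<longrightarrow> j \<le> CARD('n) \<longrightarrow> lam i \<le> lam j"
    and mult: "\<And>\<mu>. card {i \<in> {1..CARD('n)}. lam i = \<mu>} = dim (eigenspace M \<mu>)"
    and k1: "1 \<le> k" and k2: "k \<le> CARD('n)"
  obtains Ugt Uge where "subspace Ugt" "subspace Uge"
    "dim Ugt + k + dim (eigenspace M (lam k)) \<ge> CARD('n) + 1"
    "dim Uge + k \<ge> CARD('n) + 1"
    "\<And>g. g \<in> Ugt \<Longrightarrow> g \<noteq> 0 \<Longrightarrow> Qf M (lam k) g > 0"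
    "\<And>g. g \<in> Uge \<Longrightarrow> Qf M (lam k) g \<ge> 0"
    "\<And>g. g \<in> Uge \<Longrightarrow> Qf M (lam k) g = 0 \<Longrightarrow> g \<in> eigenspace M (lam k)"
proof -
  note k = k1 k2
  have sorted: "lam i \<le> lam j" if "1 \<le> i" "i \<le> j" "j \<le> CARD('n)" for i j
    using sorted0 that by blast
  define n where "n = CARD('n)"
  define l where "l = lam k"
  define Agt where "Agt = {i \<in> {1..n}. l < lam i}"
  define Age where "Age = {i \<in> {1..n}. l \<le> lam i}"
  define Ugt where "Ugt = SP M (lam ` Agt)"
  define Uge where "Uge = SP M (lam ` Age)"
  have dgt: "dim Ugt = card Agt"
    unfolding Ugt_def Agt_def n_def by (rule dim_SP_count[OF symm mult])
  have dge: "dim Uge = card Age"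
    unfolding Uge_def Age_def n_def by (rule dim_SP_count[OF symm mult])
  have r: "card {i \<in> {1..n}. lam i = l} = dim (eigenspace M l)"
    using mult n_def by simp
  have cover: "{1..n} \<subseteq> Agt \<union> {i \<in> {1..n}. lam i = l} \<union> {1..k-1}"
  proof
    fix i assume i: "i \<in> {1..n}"
    show "i \<in> Agt \<union> {i \<in> {1..n}. lam i = l} \<union> {1..k-1}"
    proof (cases "k \<le> i")
      case True
      then have "l \<le> lam i" using sorted[of k i] k i by (simp add: l_def n_def)
      then show ?thesis using i by (auto simp: Agt_def)
    next
      case False
      then show ?thesis using i by auto
    qed
  qed
  have "n \<le> card (Agt \<union> {i \<in> {1..n}. lam i = l} \<union> {1..k-1})"
    using card_mono[OF _ cover] by (simp add: Agt_def)
  also have "\<dots> \<le> card Agt + card {i \<in> {1..n}. lam i = l} + card {1..k-1}"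
    by (meson add_le_mono card_Un_le le_refl order_trans)
  finally have c1: "n \<le> card Agt + dim (eigenspace M l) + (k - 1)" using r by simp
  have "{k..n} \<subseteq> Age"
  proof
    fix i assume "i \<in> {k..n}"
    then show "i \<in> Age" using sorted[of k i] k by (auto simp: Age_def l_def n_def)
  qed
  then have "card {k..n} \<le> card Age" by (intro card_mono) (auto simp: Age_def)
  then have c2: "n + 1 \<le> card Age + k" using k by (simp add: n_def)
  have fin: "finite (lam ` Agt)" by (simp add: Agt_def)
  have pos: "\<And>g. g \<in> Ugt \<Longrightarrow> g \<noteq> 0 \<Longrightarrow> Qf M l g > 0"
    unfolding Ugt_def by (rule Qf_pos[OF symm fin]) (auto simp: Agt_def)
  have lk: "l \<notin> lam ` Agt" by (auto simp: Agt_def)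
  have ins: "lam ` Age = insert l (lam ` Agt)"
    using k by (auto simp: Age_def Agt_def l_def n_def)
  have dec: "\<exists>a b. g = a + b \<and> a \<in> eigenspace M l \<and> b \<in> Ugt" if "g \<in> Uge" for g
    using that unfolding Uge_def ins SP_insert Ugt_def by blast
  have qdec: "Qf M l g = Qf M l b" if "g = a + b" "a \<in> eigenspace M l" "b \<in> Ugt" for g a b
  proof -
    have "Qf M l g = Qf M l a + Qf M l b"
      using Qf_add[OF symm lk that(2)] that(1,3) by (simp add: Ugt_def)
    moreover have "Qf M l a = 0" using Qf_eig[OF that(2)] by simp
    ultimately show ?thesis by simp
  qed
  show ?thesis
  proof (rule that[of Ugt Uge])
    show "subspace Ugt" by (simp add: Ugt_def subspace_SP)
    show "subspace Uge" by (simp add: Uge_def subspace_SP)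
    show "CARD('n) + 1 \<le> dim Ugt + k + dim (eigenspace M (lam k))"
      using c1 dgt k by (simp add: n_def l_def)
    show "CARD('n) + 1 \<le> dim Uge + k" using c2 dge by (simp add: n_def)
    show "\<And>g. g \<in> Ugt \<Longrightarrow> g \<noteq> 0 \<Longrightarrow> Qf M (lam k) g > 0" using pos l_def by simp
    show "Qf M (lam k) g \<ge> 0" if gU: "g \<in> Uge" for g
    proof -
      obtain a b where ab: "g = a + b" "a \<in> eigenspace M l" "b \<in> Ugt" using dec[OF gU] by blast
      show ?thesis using qdec[OF ab] pos[OF ab(3)] by (cases "b = 0") (auto simp: Qf_def l_def)
    qed
    show "g \<in> eigenspace M (lam k)" if gU: "g \<in> Uge" and gQ: "Qf M (lam k) g = 0" for g
    proof -
      obtain a b where ab: "g = a + b" "a \<in> eigenspace M l" "b \<in> Ugt" using dec[OF gU] by blast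
      have "b = 0" using qdec[OF ab] pos[OF ab(3)] gQ l_def by force
      then show ?thesis using ab l_def by simp
    qed
  qed
qed

section \<open>Quadratic form identity\<close>

lemma Msym_entry:
  fixes M :: "real^'n^'n"
  assumes "transpose M = M"
  shows "M $ y $ x = M $ x $ y"
proof -
  have "(transpose M) $ x $ y = M $ y $ x" by (simp add: transpose_def)
  then show ?thesis using assms by simp
qed

lemma mv_comp: "(M *v v) $ x = (\<Sum>y\<in>UNIV. M $ x $ y * v $ y)"
  by (simp add: matrix_vector_mult_def)

lemma inner_vec_real: "(u::real^'n) \<bullet> v = (\<Sum>x\<in>UNIV. u $ x * v $ x)"
  by (simp add: inner_vec_def)

lemma quad_identity:
  fixes M :: "real^'n^'n"
  assumes symm: "transpose M = M" and eig: "M *v f = l *\<^sub>R f"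
    and zero: "\<And>x. f $ x = 0 \<Longrightarrow> g $ x = 0"
  shows "Qf M l g = - (1/2) * (\<Sum>x\<in>UNIV. \<Sum>y\<in>UNIV.
            f $ x * M $ x $ y * f $ y * (g $ x / f $ x - g $ y / f $ y)^2)"
proof -
  define A where "A x = g $ x / f $ x" for x
  have gA: "g $ x = A x * f $ x" for x
    using zero[of x] by (cases "f $ x = 0") (auto simp: A_def)
  have fe: "l * f $ x = (\<Sum>y\<in>UNIV. M $ x $ y * f $ y)" for x
    using arg_cong[OF eig, of "\<lambda>v. v $ x"] by (simp add: mv_comp)
  define S1 where "S1 = (\<Sum>x\<in>UNIV. \<Sum>y\<in>UNIV. f $ x * M $ x $ y * f $ y * (A x * A y))"
  define S2 where "S2 = (\<Sum>x\<in>UNIV. \<Sum>y\<in>UNIV. f $ x * M $ x $ y * f $ y * (A x)^2)"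
  define S3 where "S3 = (\<Sum>x\<in>UNIV. \<Sum>y\<in>UNIV. f $ x * M $ x $ y * f $ y * (A y)^2)"
  have e1: "g \<bullet> (M *v g) = S1"
    unfolding inner_vec_real mv_comp S1_def gA
    by (simp add: sum_distrib_left mult_ac)
  have e2: "l * (g \<bullet> g) = S2"
  proof -
    have "l * (g \<bullet> g) = (\<Sum>x\<in>UNIV. (A x)^2 * f $ x * (l * f $ x))"
      unfolding inner_vec_real gA by (simp add: sum_distrib_left power2_eq_square mult_ac)
    also have "\<dots> = S2" unfolding fe S2_def by (simp add: sum_distrib_left mult_ac)
    finally show ?thesis .
  qed
  have e3: "S2 = S3"
  proof -
    have "S3 = (\<Sum>y\<in>UNIV. \<Sum>x\<in>UNIV. f $ x * M $ x $ y * f $ y * (A y)^2)"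
      unfolding S3_def by (rule sum.swap)
    also have "\<dots> = S2" unfolding S2_def using Msym_entry[OF symm]
      by (simp add: mult_ac)
    finally show ?thesis by simp
  qed
  have H: "(\<Sum>x\<in>UNIV. \<Sum>y\<in>UNIV. f $ x * M $ x $ y * f $ y * (A x - A y)^2) = S2 + S3 - 2 * S1"
    unfolding S1_def S2_def S3_def
    by (simp add: power2_diff sum.distrib sum_subtractf sum_distrib_left algebra_simps)
  have H': "(\<Sum>x\<in>UNIV. \<Sum>y\<in>UNIV. f $ x * M $ x $ y * f $ y * (g $ x / f $ x - g $ y / f $ y)^2)
      = S2 + S3 - 2 * S1" using H by (simp add: A_def)
  show ?thesis unfolding Qf_def using H' e1 e2 e3 by linarith
qed

definition Sp :: "real^'n \<Rightarrow> ('n \<times> 'n) set \<Rightarrow> (real^'n) set" where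
  "Sp f R = {g. (\<forall>x. f $ x = 0 \<longrightarrow> g $ x = 0) \<and> (\<forall>x y. (x, y) \<in> R \<longrightarrow> g $ x * f $ y = g $ y * f $ x)}"

lemma subspace_Sp: "subspace (Sp f R)"
  unfolding subspace_def
proof (intro conjI ballI allI)
  show "0 \<in> Sp f R" by (simp add: Sp_def)
  fix x y assume x: "x \<in> Sp f R" and y: "y \<in> Sp f R"
  show "x + y \<in> Sp f R" unfolding Sp_def
  proof (intro CollectI conjI allI impI)
    fix a b assume "(a, b) \<in> R"
    then have "x $ a * f $ b = x $ b * f $ a" "y $ a * f $ b = y $ b * f $ a"
      using x y by (auto simp: Sp_def)
    then show "(x + y) $ a * f $ b = (x + y) $ b * f $ a" by (simp add: distrib_right)
  next
    fix a assume "f $ a = 0" then show "(x + y) $ a = 0" using x y by (auto simp: Sp_def)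
  qed
next
  fix c :: real and x assume x: "x \<in> Sp f R"
  show "c *\<^sub>R x \<in> Sp f R" using x by (auto simp: Sp_def mult.assoc)
qed

lemma sgn_edge_cases:
  assumes "adj M x y"
  shows "sgn_edge M x y = 1 \<or> sgn_edge M x y = -1"
  using assms by (auto simp: adj_def sgn_edge_def abs_if)

lemma term_nonneg:
  fixes M :: "real^'n^'n"
  assumes R: "\<And>x y. adj M x y \<Longrightarrow> f $ x * sgn_edge M x y * f $ y > 0 \<Longrightarrow> (x, y) \<in> R"
    and g: "g \<in> Sp f R"
  shows "f $ x * M $ x $ y * f $ y * (g $ x / f $ x - g $ y / f $ y)^2 \<ge> 0"
    and "f $ x \<noteq> 0 \<Longrightarrow> f $ y \<noteq> 0 \<Longrightarrow> adj M x y \<Longrightarrow> g $ x / f $ x \<noteq> g $ y / f $ y \<Longrightarrow>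
         f $ x * M $ x $ y * f $ y * (g $ x / f $ x - g $ y / f $ y)^2 > 0"
proof -
  have key: "f $ x * M $ x $ y * f $ y > 0" if "f $ x \<noteq> 0" "f $ y \<noteq> 0" "adj M x y"
      "g $ x / f $ x \<noteq> g $ y / f $ y"
  proof -
    have "(x, y) \<notin> R"
    proof
      assume "(x, y) \<in> R"
      then have "g $ x * f $ y = g $ y * f $ x" using g by (auto simp: Sp_def)
      then show False using that by (simp add: field_simps)
    qed
    then have le: "f $ x * sgn_edge M x y * f $ y \<le> 0" using R[OF that(3)] by force
    have Mne: "M $ x $ y \<noteq> 0" using that(3) by (simp add: adj_def)
    have "f $ x * sgn_edge M x y * f $ y \<noteq> 0" using that(1,2) sgn_edge_cases[OF that(3)] by auto
    then have lt: "f $ x * sgn_edge M x y * f $ y < 0" using le by (simp add: order_less_le)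
    have "f $ x * sgn_edge M x y * f $ y = - (f $ x * M $ x $ y * f $ y) / \<bar>M $ x $ y\<bar>"
      by (simp add: sgn_edge_def)
    then have "0 < f $ x * M $ x $ y * f $ y / \<bar>M $ x $ y\<bar>" using lt by simp
    then show ?thesis using Mne by (simp add: zero_less_divide_iff)
  qed
  show "f $ x \<noteq> 0 \<Longrightarrow> f $ y \<noteq> 0 \<Longrightarrow> adj M x y \<Longrightarrow> g $ x / f $ x \<noteq> g $ y / f $ y \<Longrightarrow>
         f $ x * M $ x $ y * f $ y * (g $ x / f $ x - g $ y / f $ y)^2 > 0"
    using key by simp
  show "f $ x * M $ x $ y * f $ y * (g $ x / f $ x - g $ y / f $ y)^2 \<ge> 0"
  proof (cases "f $ x \<noteq> 0 \<and> f $ y \<noteq> 0 \<and> adj M x y \<and> g $ x / f $ x \<noteq> g $ y / f $ y")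
    case True
    then show ?thesis using key by simp
  next
    case False
    then show ?thesis by (auto simp: adj_def)
  qed
qed

lemma Sp_Q:
  fixes M :: "real^'n^'n"
  assumes symm: "transpose M = M" and eig: "M *v f = l *\<^sub>R f"
    and R: "\<And>x y. adj M x y \<Longrightarrow> f $ x * sgn_edge M x y * f $ y > 0 \<Longrightarrow> (x, y) \<in> R"
    and g: "g \<in> Sp f R"
  shows "Qf M l g \<le> 0"
    and "Qf M l g = 0 \<Longrightarrow> f $ x \<noteq> 0 \<Longrightarrow> f $ y \<noteq> 0 \<Longrightarrow> adj M x y \<Longrightarrow> g $ x / f $ x = g $ y / f $ y"
proof -
  have zero: "\<And>x. f $ x = 0 \<Longrightarrow> g $ x = 0" using g by (auto simp: Sp_def)
  define T where "T x y = f $ x * M $ x $ y * f $ y * (g $ x / f $ x - g $ y / f $ y)^2" for x y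
  have Tn: "T x y \<ge> 0" for x y unfolding T_def by (rule term_nonneg(1)[OF R g])
  have Q: "Qf M l g = - (1/2) * (\<Sum>x\<in>UNIV. \<Sum>y\<in>UNIV. T x y)"
    unfolding T_def by (rule quad_identity[OF symm eig zero])
  have S: "(\<Sum>x\<in>UNIV. \<Sum>y\<in>UNIV. T x y) \<ge> 0" by (intro sum_nonneg Tn)
  then show "Qf M l g \<le> 0" using Q by simp
  assume Q0: "Qf M l g = 0" and xy: "f $ x \<noteq> 0" "f $ y \<noteq> 0" "adj M x y"
  show "g $ x / f $ x = g $ y / f $ y"
  proof (rule ccontr)
    assume ne: "g $ x / f $ x \<noteq> g $ y / f $ y"
    have pos: "T x y > 0" unfolding T_def by (rule term_nonneg(2)[OF R g xy ne])
    have "T x y \<le> (\<Sum>y\<in>UNIV. T x y)"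
      by (rule member_le_sum) (auto intro: Tn)
    also have "\<dots> \<le> (\<Sum>x\<in>UNIV. \<Sum>y\<in>UNIV. T x y)"
      by (rule member_le_sum[where f = "\<lambda>x. \<Sum>y\<in>UNIV. T x y"]) (auto intro: sum_nonneg Tn)
    finally show False using pos Q Q0 by simp
  qed
qed

section \<open>Classes give independent vectors\<close>

definition cvec :: "real^'n \<Rightarrow> 'n set \<Rightarrow> real^'n" where
  "cvec f X = (\<chi> x. if x \<in> X then f $ x else 0)"

lemma cvec_nz: "X \<subseteq> nz_set f \<Longrightarrow> (cvec f X $ x \<noteq> 0) = (x \<in> X)"
  by (auto simp: cvec_def nz_set_def)

lemma card_le_dim_Sp:
  fixes f :: "real^'n"
  assumes eq: "equiv (nz_set f) R"
  shows "card (nz_set f // R) \<le> dim (Sp f R)"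
proof -
  define Q where "Q = nz_set f // R"
  have sub: "X \<subseteq> nz_set f" if "X \<in> Q" for X
    using in_quotient_imp_subset[OF eq] that Q_def by blast
  have inj: "inj_on (cvec f) Q"
  proof (rule inj_onI)
    fix X Y assume XY: "X \<in> Q" "Y \<in> Q" "cvec f X = cvec f Y"
    show "X = Y"
    proof (rule set_eqI)
      fix x show "(x \<in> X) = (x \<in> Y)"
        using cvec_nz[OF sub[OF XY(1)], of x] cvec_nz[OF sub[OF XY(2)], of x] XY(3) by simp
    qed
  qed
  have inS: "cvec f ` Q \<subseteq> Sp f R"
  proof
    fix v assume "v \<in> cvec f ` Q"
    then obtain X where X: "X \<in> Q" "v = cvec f X" by blast
    show "v \<in> Sp f R" unfolding Sp_def
    proof (intro CollectI conjI allI impI)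
      fix x assume "f $ x = 0"
      then have "x \<notin> X" using sub[OF X(1)] by (auto simp: nz_set_def)
      then show "v $ x = 0" using X by (simp add: cvec_def)
    next
      fix a b assume ab: "(a, b) \<in> R"
      have ba: "(b, a) \<in> R" using ab eq by (meson equivE symE)
      have "a \<in> X \<longleftrightarrow> b \<in> X"
        using in_quotient_imp_closed[OF eq] X(1) ab ba Q_def by blast
      then show "v $ a * f $ b = v $ b * f $ a" using X by (simp add: cvec_def)
    qed
  qed
  have orth: "pairwise orthogonal (cvec f ` Q)"
  proof (rule pairwiseI)
    fix u v assume u: "u \<in> cvec f ` Q" and v: "v \<in> cvec f ` Q" and uv: "u \<noteq> v"
    obtain X where X: "X \<in> Q" "u = cvec f X" using u by blast
    obtain Y where Y: "Y \<in> Q" "v = cvec f Y" using v by blast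
    have "X \<noteq> Y" using uv X Y by blast
    then have d: "X \<inter> Y = {}" using quotient_disj[OF eq] X(1) Y(1) Q_def by blast
    have "u \<bullet> v = (\<Sum>x\<in>UNIV. u $ x * v $ x)" by (rule inner_vec_real)
    also have "\<dots> = 0" using d X Y by (intro sum.neutral) (auto simp: cvec_def)
    finally show "orthogonal u v" by (simp add: orthogonal_def)
  qed
  have n0: "0 \<notin> cvec f ` Q"
  proof
    assume "0 \<in> cvec f ` Q"
    then obtain X where X: "X \<in> Q" "0 = cvec f X" by blast
    have "X \<noteq> {}" using in_quotient_imp_non_empty[OF eq] X(1) Q_def by blast
    then obtain x where "x \<in> X" by blast
    then show False using cvec_nz[OF sub[OF X(1)], of x] X(2) by simp
  qed
  have "card Q = card (cvec f ` Q)" using card_image[OF inj] by simp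
  also have "\<dots> \<le> dim (Sp f R)"
    by (rule independent_card_le_dim[OF inS pairwise_orthogonal_independent[OF orth n0]])
  finally show ?thesis by (simp add: Q_def)
qed

lemma dim_Int_ge:
  fixes S T :: "(real^'n) set"
  assumes "subspace S" "subspace T"
  shows "dim S + dim T \<le> CARD('n) + dim (S \<inter> T)"
proof -
  have "dim {x + y |x y. x \<in> S \<and> y \<in> T} + dim (S \<inter> T) = dim S + dim T"
    by (rule dim_sums_Int[OF assms])
  moreover have "dim {x + y |x y. x \<in> S \<and> y \<in> T} \<le> CARD('n)" by (rule dim_subset_UNIV_cart)
  ultimately show ?thesis by linarith
qed

lemma adj_sym:
  fixes M :: "real^'n^'n"
  assumes "transpose M = M"
  shows "adj M x y = adj M y x"
  using Msym_entry[OF assms] by (auto simp: adj_def)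

lemma sgn_edge_sym:
  fixes M :: "real^'n^'n"
  assumes "transpose M = M"
  shows "sgn_edge M x y = sgn_edge M y x"
  using Msym_entry[OF assms] by (simp add: sgn_edge_def)

lemma S_edge:
  assumes "adj M x y" "f $ x * sgn_edge M x y * f $ y > 0"
  shows "(x, y) \<in> walk_rel (S_walk M f) f"
proof -
  have nz: "f $ x \<noteq> 0" "f $ y \<noteq> 0" using assms(2) by auto
  have "S_walk M f [x, y]"
    unfolding S_walk_def is_walk_def using assms
    by (auto simp: less_Suc_eq nth_Cons split: nat.splits)
  then show ?thesis using nz unfolding walk_rel_def nz_set_def
    by (intro CollectI case_prodI conjI) (auto intro!: exI[of _ "[x, y]"])
qed

lemma W_edge:
  assumes "adj M x y" "f $ x * sgn_edge M x y * f $ y > 0"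
  shows "(x, y) \<in> walk_rel (W_walk M f) f"
proof -
  have nz: "f $ x \<noteq> 0" "f $ y \<noteq> 0" using assms(2) by auto
  have w: "is_walk M [x, y]"
    unfolding is_walk_def using assms
    by (auto simp: less_Suc_eq nth_Cons split: nat.splits)
  have "W_walk M f [x, y]"
    unfolding W_walk_def
  proof (intro conjI w allI impI)
    fix i j assume ij: "i < j \<and> j < length [x, y] \<and> f $ ([x, y] ! i) \<noteq> 0 \<and> f $ ([x, y] ! j) \<noteq> 0 \<and>
      (\<forall>l. i < l \<and> l < j \<longrightarrow> f $ ([x, y] ! l) = 0)"
    then have "i = 0" "j = 1" by auto
    then show "0 < f $ ([x, y] ! i) * (\<Prod>l = i..<j. sgn_edge M ([x, y] ! l) ([x, y] ! Suc l)) * f $ ([x, y] ! j)"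
      using assms(2) by simp
  qed
  then show ?thesis using nz unfolding walk_rel_def nz_set_def
    by (intro CollectI case_prodI conjI) (auto intro!: exI[of _ "[x, y]"])
qed

section \<open>Components\<close>

definition crel :: "real^'n^'n \<Rightarrow> ('n \<times> 'n) set" where
  "crel M = {(x, y). (adj M)\<^sup>*\<^sup>* x y}"

lemma crel_sym:
  fixes M :: "real^'n^'n"
  assumes symm: "transpose M = M" and "(adj M)\<^sup>*\<^sup>* x y"
  shows "(adj M)\<^sup>*\<^sup>* y x"
  using assms(2)
proof (induction rule: rtranclp_induct)
  case base then show ?case by simp
next
  case (step y z)
  then show ?case using adj_sym[OF symm] by (meson converse_rtranclp_into_rtranclp)
qed

lemma crel_equiv:
  fixes M :: "real^'n^'n"
  assumes symm: "transpose M = M"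
  shows "equiv UNIV (crel M)"
proof (rule equivI)
  show "crel M \<subseteq> UNIV \<times> UNIV" by simp
  show "refl (crel M)" by (auto simp: refl_on_def crel_def)
  show "sym (crel M)" using crel_sym[OF symm] by (auto simp: sym_def crel_def)
  show "trans (crel M)" by (auto simp: trans_def crel_def)
qed

lemma comp_span:
  fixes M :: "real^'n^'n"
  assumes symm: "transpose M = M"
    and zero: "\<And>x. f $ x = 0 \<Longrightarrow> g $ x = 0"
    and const: "\<And>x y. f $ x \<noteq> 0 \<Longrightarrow> f $ y \<noteq> 0 \<Longrightarrow> (adj M)\<^sup>*\<^sup>* x y \<Longrightarrow> g $ x / f $ x = g $ y / f $ y"
  shows "g \<in> span (cvec f ` (UNIV // crel M))"
proof -
  define Q where "Q = UNIV // crel M"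
  have eq: "equiv UNIV (crel M)" by (rule crel_equiv[OF symm])
  define a where "a C = (if \<exists>x\<in>C. f $ x \<noteq> 0 then g $ (SOME x. x \<in> C \<and> f $ x \<noteq> 0) / f $ (SOME x. x \<in> C \<and> f $ x \<noteq> 0) else 0)" for C
  define h where "h = (\<Sum>C\<in>Q. a C *\<^sub>R cvec f C)"
  have hs: "h \<in> span (cvec f ` Q)"
    unfolding h_def by (intro span_sum span_scale span_base) auto
  have "g = h"
  proof (rule vec_eq_iff[THEN iffD2], rule allI)
    fix x
    define Cx where "Cx = crel M `` {x}"
    have CxQ: "Cx \<in> Q" by (simp add: Q_def Cx_def quotientI)
    have xC: "x \<in> C \<longleftrightarrow> C = Cx" if "C \<in> Q" for C
    proof
      assume "x \<in> C"
      then show "C = Cx" using that eq unfolding Q_def Cx_def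
        by (metis equiv_class_eq_iff quotientE Image_singleton_iff)
    next
      assume "C = Cx"
      then show "x \<in> C" unfolding Cx_def by (simp add: crel_def)
    qed
    have "h $ x = (\<Sum>C\<in>Q. a C * (if x \<in> C then f $ x else 0))"
      by (simp add: h_def cvec_def sum_component)
    also have "\<dots> = (\<Sum>C\<in>Q. if C = Cx then a C * f $ x else 0)"
      by (rule sum.cong) (auto simp: xC)
    also have "\<dots> = a Cx * f $ x" using CxQ by (simp add: sum.delta' Q_def)
    also have "\<dots> = g $ x"
    proof (cases "f $ x = 0")
      case True then show ?thesis using zero by simp
    next
      case False
      have xCx: "x \<in> Cx" using xC[OF CxQ] by simp
      then have ex: "\<exists>y\<in>Cx. f $ y \<noteq> 0" using False by blast
      define y where "y = (SOME y. y \<in> Cx \<and> f $ y \<noteq> 0)"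
      have y: "y \<in> Cx" "f $ y \<noteq> 0" using someI_ex[of "\<lambda>y. y \<in> Cx \<and> f $ y \<noteq> 0"] ex
        unfolding y_def by auto
      have "(adj M)\<^sup>*\<^sup>* y x"
      proof -
        have "(x, y) \<in> crel M" using y(1) by (simp add: Cx_def)
        then show ?thesis using crel_sym[OF symm] by (simp add: crel_def)
      qed
      then have "g $ y / f $ y = g $ x / f $ x" using const y(2) False by blast
      then show ?thesis using ex False unfolding a_def y_def[symmetric] by simp
    qed
    finally show "g $ x = h $ x" by simp
  qed
  then show ?thesis using hs Q_def by simp
qed

lemma dim_comp_span: "dim (span (cvec f ` (UNIV // crel M))) \<le> num_components M"
proof -
  have fin: "finite (UNIV // crel M)"
    by (rule finite_quotient) simp_all
  have "dim (span (cvec f ` (UNIV // crel M))) \<le> card (cvec f ` (UNIV // crel M))"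
    by (rule dim_le_card) (auto intro: fin)
  also have "\<dots> \<le> card (UNIV // crel M)" by (rule card_image_le[OF fin])
  finally show ?thesis by (simp add: num_components_def crel_def)
qed

lemma successively_nth:
  "successively P xs \<longleftrightarrow> (\<forall>j. Suc j < length xs \<longrightarrow> P (xs ! j) (xs ! Suc j))"
proof (induction P xs rule: successively.induct)
  case (3 P x y xs)
  show ?case
  proof
    assume "successively P (x # y # xs)"
    then show "\<forall>j. Suc j < length (x # y # xs) \<longrightarrow> P ((x # y # xs) ! j) ((x # y # xs) ! Suc j)"
      using 3 by (auto simp: nth_Cons split: nat.splits)
  next
    assume H: "\<forall>j. Suc j < length (x # y # xs) \<longrightarrow> P ((x # y # xs) ! j) ((x # y # xs) ! Suc j)"
    have "P x y" using H[rule_format, of 0] by simp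
    moreover have "\<forall>j. Suc j < length (y # xs) \<longrightarrow> P ((y # xs) ! j) ((y # xs) ! Suc j)"
      using H by (metis Suc_less_eq length_Cons nth_Cons_Suc)
    ultimately show "successively P (x # y # xs)" using 3 by simp
  qed
qed auto

lemma is_walk_succ: "is_walk M ys \<longleftrightarrow> length ys \<ge> 2 \<and> successively (adj M) ys"
  by (simp add: is_walk_def successively_nth)

lemma walk_rel_equiv:
  assumes len: "\<And>ys. P ys \<Longrightarrow> length ys \<ge> 2"
    and rv: "\<And>ys. P ys \<Longrightarrow> P (rev ys)"
    and ap: "\<And>ys zs. P ys \<Longrightarrow> P zs \<Longrightarrow> last ys = hd zs \<Longrightarrow> f $ hd zs \<noteq> 0 \<Longrightarrow> P (ys @ tl zs)"
  shows "equiv (nz_set f) (walk_rel P f)"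
proof (rule equivI)
  show "walk_rel P f \<subseteq> nz_set f \<times> nz_set f" by (auto simp: walk_rel_def)
  show "refl_on (nz_set f) (walk_rel P f)" by (auto simp: refl_on_def walk_rel_def)
  show "sym (walk_rel P f)" by (auto simp: sym_def walk_rel_def)
  have dir: "\<exists>ys. P ys \<and> hd ys = x \<and> last ys = y"
    if "(x, y) \<in> walk_rel P f" "x \<noteq> y" for x y
  proof -
    have "\<exists>ys. P ys \<and> ((hd ys = x \<and> last ys = y) \<or> (hd ys = y \<and> last ys = x))"
      using that unfolding walk_rel_def by blast
    then obtain ys where ys: "P ys" "(hd ys = x \<and> last ys = y) \<or> (hd ys = y \<and> last ys = x)"
      by blast
    have ne: "ys \<noteq> []" using len[OF ys(1)] by auto
    show ?thesis
    proof (cases "hd ys = x \<and> last ys = y")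
      case True then show ?thesis using ys by blast
    next
      case False
      then have "hd ys = y" "last ys = x" using ys by auto
      then have "hd (rev ys) = x" "last (rev ys) = y" using ne by (simp_all add: hd_rev last_rev)
      then show ?thesis using rv[OF ys(1)] by blast
    qed
  qed
  show "trans (walk_rel P f)"
  proof (rule transI)
    fix x y z assume xy: "(x, y) \<in> walk_rel P f" and yz: "(y, z) \<in> walk_rel P f"
    show "(x, z) \<in> walk_rel P f"
    proof (cases "x = y \<or> y = z")
      case True then show ?thesis using xy yz by auto
    next
      case False
      obtain ys where ys: "P ys" "hd ys = x" "last ys = y" using dir[OF xy] False by blast
      obtain zs where zs: "P zs" "hd zs = y" "last zs = z" using dir[OF yz] False by blast
      have yn: "f $ y \<noteq> 0" using xy by (auto simp: walk_rel_def nz_set_def)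
      have w: "P (ys @ tl zs)" using ap[OF ys(1) zs(1)] ys zs yn by simp
      have l1: "length ys \<ge> 2" "length zs \<ge> 2" using len ys(1) zs(1) by auto
      have "tl zs \<noteq> []" using l1 by (cases zs) auto
      then have "hd (ys @ tl zs) = x" "last (ys @ tl zs) = z"
        using ys zs l1 by (auto simp: last_tl hd_append)
      then show ?thesis using w xy yz by (auto simp: walk_rel_def)
    qed
  qed
qed

lemma S_walk_succ:
  "S_walk M f ys \<longleftrightarrow> length ys \<ge> 2 \<and>
     successively (\<lambda>a b. adj M a b \<and> f $ a * sgn_edge M a b * f $ b > 0) ys"
  unfolding S_walk_def is_walk_def successively_nth by auto

lemma S_equiv:
  fixes M :: "real^'n^'n"
  assumes symm: "transpose M = M"
  shows "equiv (nz_set f) (walk_rel (S_walk M f) f)"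
proof (rule walk_rel_equiv)
  show "\<And>ys. S_walk M f ys \<Longrightarrow> 2 \<le> length ys" by (simp add: S_walk_succ)
  show "S_walk M f (rev ys)" if "S_walk M f ys" for ys
  proof -
    have "successively (\<lambda>x y. adj M y x \<and> f $ y * sgn_edge M y x * f $ x > 0) ys"
    proof (rule successively_mono)
      show "successively (\<lambda>a b. adj M a b \<and> f $ a * sgn_edge M a b * f $ b > 0) ys"
        using that unfolding S_walk_succ by simp
    next
      fix a b assume "adj M a b \<and> f $ a * sgn_edge M a b * f $ b > 0"
      then show "adj M b a \<and> f $ b * sgn_edge M b a * f $ a > 0"
        using adj_sym[OF symm] sgn_edge_sym[OF symm] by (simp add: mult_ac)
    qed
    then show ?thesis using that unfolding S_walk_succ by simp
  qed
  show "S_walk M f (ys @ tl zs)"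
    if H: "S_walk M f ys" "S_walk M f zs" "last ys = hd zs" "f $ hd zs \<noteq> 0" for ys zs
  proof -
    obtain y zs' where zs: "zs = y # zs'" "zs' \<noteq> []" using H(2) unfolding S_walk_succ
      by (cases zs; cases "tl zs") auto
    show ?thesis using H zs unfolding S_walk_succ
      by (auto simp: successively_append_iff successively_Cons)
  qed
qed

definition pp :: "real^'n^'n \<Rightarrow> 'n list \<Rightarrow> nat \<Rightarrow> real" where
  "pp M ys l = (\<Prod>t<l. sgn_edge M (ys ! t) (ys ! Suc t))"

definition good :: "real^'n^'n \<Rightarrow> real^'n \<Rightarrow> real \<Rightarrow> 'n list \<Rightarrow> bool" where
  "good M f e ys \<longleftrightarrow> (\<forall>l<length ys. f $ (ys ! l) \<noteq> 0 \<longrightarrow> e * pp M ys l * f $ (ys ! l) > 0)"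

definition walkw :: "real^'n^'n \<Rightarrow> real^'n \<Rightarrow> 'n list \<Rightarrow> bool" where
  "walkw M f ys \<longleftrightarrow> is_walk M ys \<and> (\<exists>e. (e = 1 \<or> e = -1) \<and> good M f e ys)"

lemma pp_0 [simp]: "pp M ys 0 = 1"
  by (simp add: pp_def)

lemma pp_Suc: "pp M ys (Suc l) = pp M ys l * sgn_edge M (ys ! l) (ys ! Suc l)"
  by (simp add: pp_def)

lemma walk_adj: "is_walk M ys \<Longrightarrow> Suc l < length ys \<Longrightarrow> adj M (ys ! l) (ys ! Suc l)"
  by (simp add: is_walk_def)

lemma sgn_sq: "adj M x y \<Longrightarrow> sgn_edge M x y * sgn_edge M x y = 1"
  using sgn_edge_cases by fastforce

lemma pp_pm: "is_walk M ys \<Longrightarrow> l < length ys \<Longrightarrow> pp M ys l = 1 \<or> pp M ys l = -1"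
proof (induction l)
  case 0 then show ?case by simp
next
  case (Suc l)
  have "sgn_edge M (ys ! l) (ys ! Suc l) = 1 \<or> sgn_edge M (ys ! l) (ys ! Suc l) = -1"
    using sgn_edge_cases walk_adj[OF Suc(2,3)] by blast
  then show ?case using Suc by (auto simp: pp_Suc)
qed

lemma pp_sq: "is_walk M ys \<Longrightarrow> l < length ys \<Longrightarrow> pp M ys l * pp M ys l = 1"
  using pp_pm by fastforce

lemma pp_range: "i \<le> j \<Longrightarrow> pp M ys j = pp M ys i * (\<Prod>l\<in>{i..<j}. sgn_edge M (ys ! l) (ys ! Suc l))"
proof (induction j rule: dec_induct)
  case base then show ?case by simp
next
  case (step j)
  then show ?case by (simp add: pp_Suc prod.atLeastLessThan_Suc)
qed

lemma pm_eq: "(a::real) = 1 \<or> a = -1 \<Longrightarrow> b = 1 \<or> b = -1 \<Longrightarrow> a * x > 0 \<Longrightarrow> b * x > 0 \<Longrightarrow> a = b"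
  by auto

lemma sign_chain: "(a::real) * b > 0 \<Longrightarrow> e * a > 0 \<Longrightarrow> e * b > 0"
  by (auto simp: zero_less_mult_iff)

lemma W_iff: "W_walk M f ys \<longleftrightarrow> walkw M f ys"
proof
  assume W: "W_walk M f ys"
  then have walk: "is_walk M ys" by (simp add: W_walk_def)
  define NZ where "NZ = {l. l < length ys \<and> f $ (ys ! l) \<noteq> 0}"
  show "walkw M f ys"
  proof (cases "NZ = {}")
    case True
    then have "good M f 1 ys" unfolding good_def NZ_def by blast
    then show ?thesis using walk unfolding walkw_def by blast
  next
    case False
    define i0 where "i0 = (LEAST l. l \<in> NZ)"
    obtain l0 where "l0 \<in> NZ" using False by blast
    then have i0: "i0 \<in> NZ" unfolding i0_def by (rule LeastI)
    have i0min: "i0 \<le> l" if "l \<in> NZ" for l unfolding i0_def by (rule Least_le) (rule that)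
    define e where "e = (if pp M ys i0 * f $ (ys ! i0) > 0 then 1 else (-1::real))"
    have e1: "e = 1 \<or> e = -1" by (simp add: e_def)
    have ppi0: "pp M ys i0 = 1 \<or> pp M ys i0 = -1" using pp_pm[OF walk] i0 by (auto simp: NZ_def)
    have nzp: "pp M ys i0 * f $ (ys ! i0) \<noteq> 0" using ppi0 i0 unfolding NZ_def by auto
    have ei0: "e * pp M ys i0 * f $ (ys ! i0) > 0"
    proof (cases "pp M ys i0 * f $ (ys ! i0) > 0")
      case True then show ?thesis by (simp add: e_def mult.assoc)
    next
      case False
      then have "pp M ys i0 * f $ (ys ! i0) < 0" using nzp by (meson linorder_neqE_linordered_idom)
      then show ?thesis using False by (simp add: e_def mult.assoc)
    qed
    have main: "e * pp M ys l * f $ (ys ! l) > 0" if "l \<in> NZ" for l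
      using that
    proof (induction l rule: less_induct)
      case (less l)
      show ?case
      proof (cases "l = i0")
        case True then show ?thesis using ei0 by simp
      next
        case False
        then have "i0 < l" using i0min[OF less(2)] by simp
        define I where "I = {i. i < l \<and> i \<in> NZ}"
        have fI: "finite I" by (simp add: I_def)
        have i0I: "i0 \<in> I" using \<open>i0 < l\<close> i0 by (simp add: I_def)
        define i' where "i' = Max I"
        have i'I: "i' \<in> I" using Max_in[OF fI] i0I i'_def by blast
        have i'max: "i \<le> i'" if "i \<in> I" for i using Max_ge[OF fI that] i'_def by simp
        have between: "\<forall>t. i' < t \<and> t < l \<longrightarrow> f $ (ys ! t) = 0"
        proof (intro allI impI)
          fix t assume t: "i' < t \<and> t < l"
          show "f $ (ys ! t) = 0"
          proof (rule ccontr)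
            assume "f $ (ys ! t) \<noteq> 0"
            then have "t \<in> I" using t less(2) by (auto simp: I_def NZ_def)
            then show False using i'max t by fastforce
          qed
        qed
        have i'l: "i' < l" "i' \<in> NZ" using i'I by (auto simp: I_def)
        have pos: "f $ (ys ! i') * (\<Prod>t\<in>{i'..<l}. sgn_edge M (ys ! t) (ys ! Suc t)) * f $ (ys ! l) > 0"
        proof -
          have Wc: "\<forall>i j. i < j \<and> j < length ys \<and> f $ (ys ! i) \<noteq> 0 \<and> f $ (ys ! j) \<noteq> 0 \<and>
            (\<forall>l. i < l \<and> l < j \<longrightarrow> f $ (ys ! l) = 0) \<longrightarrow>
            f $ (ys ! i) * (\<Prod>l\<in>{i..<j}. sgn_edge M (ys ! l) (ys ! Suc l)) * f $ (ys ! j) > 0"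
            using W unfolding W_walk_def by (elim conjE)
          have "i' < l \<and> l < length ys \<and> f $ (ys ! i') \<noteq> 0 \<and> f $ (ys ! l) \<noteq> 0 \<and>
            (\<forall>t. i' < t \<and> t < l \<longrightarrow> f $ (ys ! t) = 0)"
            using i'l between less(2) unfolding NZ_def by simp
          then show ?thesis using Wc by blast
        qed
        have "pp M ys l = pp M ys i' * (\<Prod>t\<in>{i'..<l}. sgn_edge M (ys ! t) (ys ! Suc t))"
          by (rule pp_range) (use i'l in simp)
        then have P: "(\<Prod>t\<in>{i'..<l}. sgn_edge M (ys ! t) (ys ! Suc t)) = pp M ys i' * pp M ys l"
          using pp_sq[OF walk, of i'] i'l(2) by (auto simp: NZ_def algebra_simps)
        have "(pp M ys i' * f $ (ys ! i')) * (pp M ys l * f $ (ys ! l)) > 0"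
          using pos unfolding P by (simp add: mult_ac)
        moreover have "e * (pp M ys i' * f $ (ys ! i')) > 0"
          using less(1)[OF i'l(1) i'l(2)] by (simp add: mult_ac)
        ultimately have "e * (pp M ys l * f $ (ys ! l)) > 0" by (rule sign_chain)
        then show ?thesis by (simp add: mult_ac)
      qed
    qed
    have "good M f e ys" using main unfolding good_def NZ_def by blast
    then show ?thesis using walk e1 unfolding walkw_def by blast
  qed
next
  assume "walkw M f ys"
  then obtain e where walk: "is_walk M ys" and e: "e = 1 \<or> e = -1" and g: "good M f e ys"
    by (auto simp: walkw_def)
  show "W_walk M f ys" unfolding W_walk_def
  proof (intro conjI walk allI impI)
    fix i j assume H: "i < j \<and> j < length ys \<and> f $ (ys ! i) \<noteq> 0 \<and> f $ (ys ! j) \<noteq> 0 \<and>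
      (\<forall>l. i < l \<and> l < j \<longrightarrow> f $ (ys ! l) = 0)"
    have "pp M ys j = pp M ys i * (\<Prod>t\<in>{i..<j}. sgn_edge M (ys ! t) (ys ! Suc t))"
      by (rule pp_range) (use H in simp)
    then have P: "(\<Prod>t\<in>{i..<j}. sgn_edge M (ys ! t) (ys ! Suc t)) = pp M ys i * pp M ys j"
      using pp_sq[OF walk, of i] H by (auto simp: algebra_simps)
    have gi: "e * pp M ys i * f $ (ys ! i) > 0" using g H by (auto simp: good_def)
    have gj: "e * pp M ys j * f $ (ys ! j) > 0" using g H by (auto simp: good_def)
    have "f $ (ys ! i) * (pp M ys i * pp M ys j) * f $ (ys ! j)
        = (e * pp M ys i * f $ (ys ! i)) * (e * pp M ys j * f $ (ys ! j))"
      using e by auto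
    also have "\<dots> > 0" using gi gj by simp
    finally show "0 < f $ (ys ! i) * (\<Prod>l = i..<j. sgn_edge M (ys ! l) (ys ! Suc l)) * f $ (ys ! j)"
      unfolding P .
  qed
qed

lemma nth_app_tl:
  assumes "ys \<noteq> []" "zs \<noteq> []" "last ys = hd zs" "j < length zs"
  shows "(ys @ tl zs) ! (length ys - 1 + j) = zs ! j"
proof (cases j)
  case 0
  then show ?thesis using assms by (simp add: nth_append last_conv_nth hd_conv_nth)
next
  case (Suc j')
  then have e: "length ys - 1 + j = length ys + j'" using assms(1) by (cases ys) auto
  have "(ys @ tl zs) ! (length ys + j') = tl zs ! j'" by (simp add: nth_append)
  also have "\<dots> = zs ! j" using Suc assms(2) by (cases zs) auto
  finally show ?thesis using e by simp
qed

lemma pp_app1: "l \<le> length ys - 1 \<Longrightarrow> pp M (ys @ zs) l = pp M ys l"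
proof (induction l)
  case 0 then show ?case by simp
next
  case (Suc l)
  have "Suc l < length ys" using Suc.prems by linarith
  then show ?case using Suc by (simp add: pp_Suc nth_append)
qed

lemma pp_app2:
  assumes "ys \<noteq> []" "zs \<noteq> []" "last ys = hd zs"
  shows "j < length zs \<Longrightarrow> pp M (ys @ tl zs) (length ys - 1 + j) = pp M ys (length ys - 1) * pp M zs j"
proof (induction j)
  case 0 then show ?case by (simp add: pp_app1)
next
  case (Suc j)
  have a: "(ys @ tl zs) ! (length ys - 1 + j) = zs ! j" using nth_app_tl[OF assms] Suc(2) by simp
  have b: "(ys @ tl zs) ! Suc (length ys - 1 + j) = zs ! Suc j"
    using nth_app_tl[OF assms Suc(2)] by simp
  have "pp M (ys @ tl zs) (length ys - 1 + Suc j) = pp M (ys @ tl zs) (Suc (length ys - 1 + j))" by simp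
  also have "\<dots> = pp M ys (length ys - 1) * pp M zs (Suc j)"
    unfolding pp_Suc a b using Suc by simp
  finally show ?case .
qed

lemma good_app:
  assumes ne: "ys \<noteq> []" "zs \<noteq> []" and lh: "last ys = hd zs"
    and g1: "good M f e ys" and g2: "good M f (e * pp M ys (length ys - 1)) zs"
  shows "good M f e (ys @ tl zs)"
  unfolding good_def
proof (intro allI impI)
  fix l assume l: "l < length (ys @ tl zs)" and nz: "f $ ((ys @ tl zs) ! l) \<noteq> 0"
  show "e * pp M (ys @ tl zs) l * f $ ((ys @ tl zs) ! l) > 0"
  proof (cases "l < length ys")
    case True
    then have "(ys @ tl zs) ! l = ys ! l" "pp M (ys @ tl zs) l = pp M ys l"
      by (simp_all add: nth_append pp_app1)
    then show ?thesis using g1 True nz by (auto simp: good_def)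
  next
    case False
    define j where "j = l - (length ys - 1)"
    have lj: "l = length ys - 1 + j" using False ne by (simp add: j_def)
    have j: "j < length zs" using l False ne(2) by (cases zs) (auto simp: j_def)
    have "(ys @ tl zs) ! l = zs ! j" using nth_app_tl[OF ne lh j] lj by simp
    moreover have "pp M (ys @ tl zs) l = pp M ys (length ys - 1) * pp M zs j"
      using pp_app2[OF ne lh j] lj by simp
    ultimately show ?thesis using g2 j nz by (auto simp: good_def mult_ac)
  qed
qed

lemma is_walk_app:
  assumes "is_walk M ys" "is_walk M zs" "last ys = hd zs"
  shows "is_walk M (ys @ tl zs)"
proof -
  obtain y zs' where zs: "zs = y # zs'" "zs' \<noteq> []" using assms(2) unfolding is_walk_succ
    by (cases zs; cases "tl zs") auto
  show ?thesis using assms zs unfolding is_walk_succ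
    by (auto simp: successively_append_iff successively_Cons)
qed

lemma is_walk_rev:
  fixes M :: "real^'n^'n"
  assumes symm: "transpose M = M" and w: "is_walk M ys"
  shows "is_walk M (rev ys)"
proof -
  have "successively (\<lambda>x y. adj M y x) ys"
  proof (rule successively_mono)
    show "successively (adj M) ys" using w unfolding is_walk_succ by simp
  qed (use adj_sym[OF symm] in blast)
  then show ?thesis using w unfolding is_walk_succ by simp
qed

lemma pp_rev:
  fixes M :: "real^'n^'n"
  assumes symm: "transpose M = M" and w: "is_walk M ys"
  shows "l < length ys \<Longrightarrow> pp M (rev ys) l = pp M ys (length ys - 1) * pp M ys (length ys - 1 - l)"
proof (induction l)
  case 0
  then show ?case using pp_sq[OF w, of "length ys - 1"] by simp
next
  case (Suc l)
  define m where "m = length ys"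
  have lm: "Suc l < m" using Suc by (simp add: m_def)
  have r1: "rev ys ! l = ys ! (m - 1 - l)" using lm by (simp add: rev_nth m_def)
  have r2: "rev ys ! Suc l = ys ! (m - 2 - l)" using lm by (simp add: rev_nth m_def)
  have s: "Suc (m - 2 - l) = m - 1 - l" using lm by simp
  have ad: "adj M (ys ! (m - 2 - l)) (ys ! Suc (m - 2 - l))"
    by (rule walk_adj[OF w]) (use lm in \<open>simp add: m_def\<close>)
  have pps: "pp M ys (m - 1 - l) = pp M ys (m - 2 - l) * sgn_edge M (ys ! (m - 2 - l)) (ys ! (m - 1 - l))"
    using pp_Suc[of M ys "m - 2 - l"] s by simp
  have sg: "sgn_edge M (ys ! (m - 1 - l)) (ys ! (m - 2 - l)) = sgn_edge M (ys ! (m - 2 - l)) (ys ! (m - 1 - l))"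
    using sgn_edge_sym[OF symm] by simp
  have sq: "sgn_edge M (ys ! (m - 2 - l)) (ys ! (m - 1 - l)) * sgn_edge M (ys ! (m - 2 - l)) (ys ! (m - 1 - l)) = 1"
    using sgn_sq[OF ad] s by simp
  have "pp M (rev ys) (Suc l) = pp M (rev ys) l * sgn_edge M (rev ys ! l) (rev ys ! Suc l)"
    by (rule pp_Suc)
  also have "\<dots> = pp M ys (m - 1) * pp M ys (m - 1 - l) * sgn_edge M (ys ! (m - 2 - l)) (ys ! (m - 1 - l))"
    using Suc lm r1 r2 sg by (simp add: m_def)
  also have "\<dots> = pp M ys (m - 1) * pp M ys (m - 2 - l)"
    unfolding pps using sq by (simp add: mult.assoc)
  also have "m - 2 - l = m - 1 - Suc l" by simp
  finally show ?case by (simp add: m_def)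
qed

lemma good_rev:
  fixes M :: "real^'n^'n"
  assumes symm: "transpose M = M" and w: "is_walk M ys" and g: "good M f e ys"
  shows "good M f (e * pp M ys (length ys - 1)) (rev ys)"
  unfolding good_def
proof (intro allI impI)
  fix l assume l: "l < length (rev ys)" and nz: "f $ (rev ys ! l) \<noteq> 0"
  define m where "m = length ys"
  have lm: "l < m" using l by (simp add: m_def)
  have r: "rev ys ! l = ys ! (m - 1 - l)" using lm by (simp add: rev_nth m_def)
  have p: "pp M (rev ys) l = pp M ys (m - 1) * pp M ys (m - 1 - l)"
    using pp_rev[OF symm w] lm by (simp add: m_def)
  have sq: "pp M ys (m - 1) * pp M ys (m - 1) = 1" using pp_sq[OF w] lm by (simp add: m_def)
  have "e * pp M ys (m - 1 - l) * f $ (ys ! (m - 1 - l)) > 0"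
    using g nz r lm by (auto simp: good_def m_def)
  moreover have "e * pp M ys (m - 1) * pp M (rev ys) l * f $ (rev ys ! l)
      = e * pp M ys (m - 1 - l) * f $ (ys ! (m - 1 - l))"
  proof -
    have "e * pp M ys (m - 1) * pp M (rev ys) l * f $ (rev ys ! l)
        = e * (pp M ys (m - 1) * pp M ys (m - 1)) * pp M ys (m - 1 - l) * f $ (ys ! (m - 1 - l))"
      unfolding p r by (simp add: mult_ac)
    also have "\<dots> = e * pp M ys (m - 1 - l) * f $ (ys ! (m - 1 - l))" using sq by simp
    finally show ?thesis .
  qed
  ultimately have fin: "e * pp M ys (m - 1) * pp M (rev ys) l * f $ (rev ys ! l) > 0"
    by linarith
  then show "e * pp M ys (length ys - 1) * pp M (rev ys) l * f $ (rev ys ! l) > 0"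
    unfolding m_def .
qed

lemma W_equiv:
  fixes M :: "real^'n^'n"
  assumes symm: "transpose M = M"
  shows "equiv (nz_set f) (walk_rel (W_walk M f) f)"
proof (rule walk_rel_equiv)
  show "\<And>ys. W_walk M f ys \<Longrightarrow> 2 \<le> length ys" by (simp add: W_walk_def is_walk_def)
  show "W_walk M f (rev ys)" if H: "W_walk M f ys" for ys
  proof -
    obtain e where w: "is_walk M ys" and e: "e = 1 \<or> e = -1" and g: "good M f e ys"
      using H by (auto simp: W_iff walkw_def)
    have "length ys \<ge> 2" using w by (simp add: is_walk_def)
    then have "length ys - 1 < length ys" by simp
    then have pm: "pp M ys (length ys - 1) = 1 \<or> pp M ys (length ys - 1) = -1" using pp_pm[OF w] by blast
    have "e * pp M ys (length ys - 1) = 1 \<or> e * pp M ys (length ys - 1) = -1" using e pm by auto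
    then show ?thesis using good_rev[OF symm w g] is_walk_rev[OF symm w]
      by (auto simp: W_iff walkw_def)
  qed
  show "W_walk M f (ys @ tl zs)"
    if H: "W_walk M f ys" "W_walk M f zs" "last ys = hd zs" "f $ hd zs \<noteq> 0" for ys zs
  proof -
    obtain e1 where w1: "is_walk M ys" and e1: "e1 = 1 \<or> e1 = -1" and g1: "good M f e1 ys"
      using H(1) by (auto simp: W_iff walkw_def)
    obtain e2 where w2: "is_walk M zs" and e2: "e2 = 1 \<or> e2 = -1" and g2: "good M f e2 zs"
      using H(2) by (auto simp: W_iff walkw_def)
    have ne: "ys \<noteq> []" "zs \<noteq> []" using w1 w2 by (auto simp: is_walk_def)
    define m where "m = length ys - 1"
    have mlt: "m < length ys" using ne by (simp add: m_def)
    have ym: "ys ! m = hd zs" using H(3) ne by (simp add: m_def last_conv_nth)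
    have a1: "(e1 * pp M ys m) * f $ hd zs > 0" using g1 mlt ym H(4) by (auto simp: good_def mult_ac)
    have a2: "e2 * f $ hd zs > 0" using g2 ne H(4) by (auto simp: good_def hd_conv_nth)
    have pm: "pp M ys m = 1 \<or> pp M ys m = -1" using pp_pm[OF w1 mlt] .
    have "e1 * pp M ys m = 1 \<or> e1 * pp M ys m = -1" using e1 pm by auto
    then have "e2 = e1 * pp M ys m" using pm_eq[OF _ e2 a1 a2] by simp
    then have "good M f e1 (ys @ tl zs)" using good_app[OF ne H(3) g1] g2 by (simp add: m_def)
    then show ?thesis using is_walk_app[OF w1 w2 H(3)] e1 by (auto simp: W_iff walkw_def)
  qed
qed

definition CH :: "real^'n^'n \<Rightarrow> real^'n \<Rightarrow> 'n \<Rightarrow> 'n \<Rightarrow> real \<Rightarrow> bool" where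
  "CH M f u v s \<longleftrightarrow> (\<exists>ys e. is_walk M ys \<and> hd ys = u \<and> last ys = v \<and> (e = 1 \<or> e = -1) \<and>
      good M f e ys \<and> e * pp M ys (length ys - 1) = s)"

lemma CH_rel:
  assumes "CH M f u v s" "f $ u \<noteq> 0" "f $ v \<noteq> 0"
  shows "(u, v) \<in> walk_rel (W_walk M f) f"
proof -
  obtain ys e where H: "is_walk M ys" "hd ys = u" "last ys = v" "e = 1 \<or> e = -1" "good M f e ys"
    using assms(1) by (auto simp: CH_def)
  have "W_walk M f ys" using H by (auto simp: W_iff walkw_def)
  then show ?thesis using H assms(2,3) by (auto simp: walk_rel_def nz_set_def)
qed

lemma Sp_rel:
  assumes "g \<in> Sp f R" "(u, v) \<in> R" "f $ u \<noteq> 0" "f $ v \<noteq> 0"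
  shows "g $ u / f $ u = g $ v / f $ v"
proof -
  have "g $ u * f $ v = g $ v * f $ u" using assms(1,2) by (auto simp: Sp_def)
  then show ?thesis using assms(3,4) by (simp add: field_simps)
qed

lemma walk2: "adj M v w \<Longrightarrow> is_walk M [v, w]"
  by (auto simp: is_walk_def less_Suc_eq)

lemma CH_base:
  assumes "adj M v w" "f $ w = 0" "e = 1 \<or> e = -1" "e * f $ v > 0"
  shows "CH M f v w (e * sgn_edge M v w)"
proof -
  have "good M f e [v, w]"
    unfolding good_def using assms(2,4) by (auto simp: less_Suc_eq)
  moreover have "e * pp M [v, w] (length [v, w] - 1) = e * sgn_edge M v w"
    by (simp add: pp_def)
  ultimately show ?thesis using walk2[OF assms(1)] assms(3) unfolding CH_def
    by (intro exI[of _ "[v, w]"] exI[of _ e]) auto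
qed

lemma CH_ext:
  assumes "CH M f u v s" "adj M v w" "f $ v = 0"
    and "f $ w \<noteq> 0 \<Longrightarrow> s * sgn_edge M v w * f $ w > 0"
  shows "CH M f u w (s * sgn_edge M v w)"
proof -
  obtain ys e where H: "is_walk M ys" "hd ys = u" "last ys = v" "e = 1 \<or> e = -1" "good M f e ys"
    "e * pp M ys (length ys - 1) = s"
    using assms(1) by (auto simp: CH_def)
  have ne: "ys \<noteq> []" "[v, w] \<noteq> []" using H(1) by (auto simp: is_walk_def)
  have lh: "last ys = hd [v, w]" using H(3) by simp
  have g2: "good M f (e * pp M ys (length ys - 1)) [v, w]"
    unfolding good_def H(6) using assms(3,4) by (auto simp: less_Suc_eq pp_def)
  have g: "good M f e (ys @ tl [v, w])" by (rule good_app[OF ne lh H(5) g2])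
  have w: "is_walk M (ys @ tl [v, w])" by (rule is_walk_app[OF H(1) walk2[OF assms(2)] lh])
  have len: "length (ys @ tl [v, w]) - 1 = length ys - 1 + 1" using ne by simp
  have p: "pp M (ys @ tl [v, w]) (length ys - 1 + 1) = pp M ys (length ys - 1) * pp M [v, w] 1"
    by (rule pp_app2[OF ne lh]) simp
  have "e * pp M (ys @ tl [v, w]) (length (ys @ tl [v, w]) - 1) = s * sgn_edge M v w"
    unfolding len p using H(6) by (simp add: pp_def mult.assoc)
  moreover have "hd (ys @ tl [v, w]) = u" "last (ys @ tl [v, w]) = w" using H ne by auto
  ultimately show ?thesis using g w H(4) unfolding CH_def by blast
qed

lemma sgn_edge_eq: "sgn_edge M x y = - (M $ x $ y / \<bar>M $ x $ y\<bar>)"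
  by (simp add: sgn_edge_def)

lemma T3:
  fixes M :: "real^'n^'n"
  assumes symm: "transpose M = M"
    and a1: "adj M w y1" and a2: "adj M w y2" and fw: "f $ w = 0"
    and n1: "f $ y1 \<noteq> 0" and n2: "f $ y2 \<noteq> 0"
    and tt: "(M $ w $ y1 * f $ y1) * (M $ w $ y2 * f $ y2) > 0"
  shows "(y1, y2) \<in> walk_rel (W_walk M f) f"
proof -
  define e where "e = (if f $ y1 > 0 then 1 else (-1::real))"
  have e: "e = 1 \<or> e = -1" "e * f $ y1 > 0" using n1 by (auto simp: e_def)
  have b1: "adj M y1 w" using a1 adj_sym[OF symm] by simp
  have cb: "CH M f y1 w (e * sgn_edge M y1 w)" by (rule CH_base[OF b1 fw e])
  have M1: "M $ w $ y1 \<noteq> 0" "M $ w $ y2 \<noteq> 0" using a1 a2 by (auto simp: adj_def)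
  have "f $ y1 * (M $ w $ y1 * M $ w $ y2 * f $ y2) > 0" using tt by (simp add: mult_ac)
  then have eb: "e * (M $ w $ y1 * M $ w $ y2 * f $ y2) > 0" using sign_chain e(2) by blast
  have s1: "sgn_edge M y1 w = - (M $ w $ y1 / \<bar>M $ w $ y1\<bar>)"
    using sgn_edge_sym[OF symm, of y1 w] by (simp add: sgn_edge_eq)
  have "e * sgn_edge M y1 w * sgn_edge M w y2 * f $ y2
      = (e * (M $ w $ y1 * M $ w $ y2 * f $ y2)) / (\<bar>M $ w $ y1\<bar> * \<bar>M $ w $ y2\<bar>)"
    unfolding s1 sgn_edge_eq using Msym_entry[OF symm, of w y1] by (simp add: field_simps)
  also have "\<dots> > 0" using eb M1 by simp
  finally have pos: "e * sgn_edge M y1 w * sgn_edge M w y2 * f $ y2 > 0" .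
  have "CH M f y1 y2 (e * sgn_edge M y1 w * sgn_edge M w y2)"
    by (rule CH_ext[OF cb a2 fw]) (use pos in simp)
  then show ?thesis using CH_rel n1 n2 by blast
qed

lemma zero_vertex_pq:
  fixes M :: "real^'n^'n"
  assumes symm: "transpose M = M" and eig: "M *v f = l *\<^sub>R f"
    and g: "g \<in> Sp f (walk_rel (W_walk M f) f)" and geig: "M *v g = l *\<^sub>R g"
    and fw: "f $ w = 0"
    and tp: "M $ w $ p * f $ p > 0" and tq: "M $ w $ q * f $ q < 0"
  shows "g $ p / f $ p = g $ q / f $ q"
proof -
  define t where "t y = M $ w $ y * f $ y" for y
  define A where "A y = g $ y / f $ y" for y
  have gA: "g $ y = A y * f $ y" for y
    using g by (cases "f $ y = 0") (auto simp: A_def Sp_def)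
  have adjt: "adj M w y" "f $ y \<noteq> 0" if "t y \<noteq> 0" for y
    using that fw by (auto simp: t_def adj_def)
  have same: "A y = A z" if "t y * t z > 0" for y z
  proof -
    have "t y \<noteq> 0" "t z \<noteq> 0" using that by auto
    then have "(y, z) \<in> walk_rel (W_walk M f) f"
      using T3[OF symm adjt(1) adjt(1) fw adjt(2) adjt(2)] that by (simp add: t_def)
    then show ?thesis using Sp_rel[OF g] adjt \<open>t y \<noteq> 0\<close> \<open>t z \<noteq> 0\<close> by (simp add: A_def)
  qed
  have s1: "(\<Sum>y\<in>UNIV. t y) = 0"
    using arg_cong[OF eig, of "\<lambda>v. v $ w"] fw by (simp add: mv_comp t_def)
  have s2: "(\<Sum>y\<in>UNIV. A y * t y) = 0"
  proof -
    have "g $ w = 0" using g fw by (auto simp: Sp_def)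
    then have "(\<Sum>y\<in>UNIV. M $ w $ y * g $ y) = 0"
      using arg_cong[OF geig, of "\<lambda>v. v $ w"] by (simp add: mv_comp)
    then show ?thesis unfolding gA t_def by (simp add: mult_ac)
  qed
  have trm: "(A y - A q) * t y = (A p - A q) * max (t y) 0" for y
  proof (cases "t y > 0")
    case True
    then have "A y = A p" using same[of y p] tp by (simp add: t_def)
    then show ?thesis using True by simp
  next
    case False
    show ?thesis
    proof (cases "t y = 0")
      case True then show ?thesis by simp
    next
      assume "t y \<noteq> 0"
      then have "t y < 0" using False by simp
      then have "A y = A q" using same[of y q] tq by (simp add: t_def mult_neg_neg)
      then show ?thesis using \<open>t y < 0\<close> by simp
    qed
  qed
  have "(\<Sum>y\<in>UNIV. (A y - A q) * t y) = 0"
    using s1 s2 by (simp add: left_diff_distrib sum_subtractf sum_distrib_left[symmetric])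
  then have z: "(A p - A q) * (\<Sum>y\<in>UNIV. max (t y) 0) = 0"
    unfolding trm by (simp add: sum_distrib_left)
  have "t p \<le> (\<Sum>y\<in>UNIV. max (t y) 0)"
  proof -
    have "max (t p) 0 \<le> (\<Sum>y\<in>UNIV. max (t y) 0)" by (rule member_le_sum) auto
    then show ?thesis by simp
  qed
  then have "(\<Sum>y\<in>UNIV. max (t y) 0) > 0" using tp by (simp add: t_def)
  then have "A p = A q" using z by simp
  then show ?thesis by (simp add: A_def)
qed

lemma zero_vertex:
  fixes M :: "real^'n^'n"
  assumes symm: "transpose M = M" and eig: "M *v f = l *\<^sub>R f"
    and g: "g \<in> Sp f (walk_rel (W_walk M f) f)" and geig: "M *v g = l *\<^sub>R g"
    and fw: "f $ w = 0"
    and a1: "adj M w y1" and a2: "adj M w y2" and n1: "f $ y1 \<noteq> 0" and n2: "f $ y2 \<noteq> 0"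
  shows "g $ y1 / f $ y1 = g $ y2 / f $ y2"
proof -
  have t1: "M $ w $ y1 * f $ y1 \<noteq> 0" "M $ w $ y2 * f $ y2 \<noteq> 0" using a1 a2 n1 n2 by (auto simp: adj_def)
  consider "(M $ w $ y1 * f $ y1) * (M $ w $ y2 * f $ y2) > 0"
    | "M $ w $ y1 * f $ y1 > 0" "M $ w $ y2 * f $ y2 < 0"
    | "M $ w $ y1 * f $ y1 < 0" "M $ w $ y2 * f $ y2 > 0"
    using t1 by (metis linorder_neqE_linordered_idom mult_neg_neg mult_pos_pos)
  then show ?thesis
  proof cases
    case 1
    then show ?thesis using T3[OF symm a1 a2 fw n1 n2] Sp_rel[OF g] n1 n2 by blast
  next
    case 2
    then show ?thesis using zero_vertex_pq[OF symm eig g geig fw] by blast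
  next
    case 3
    then show ?thesis using zero_vertex_pq[OF symm eig g geig fw, of y2 y1] by simp
  qed
qed

lemma opposite_nb:
  fixes M :: "real^'n^'n"
  assumes eig: "M *v f = l *\<^sub>R f" and fw: "f $ w = 0" and a: "adj M w v" and n: "f $ v \<noteq> 0"
  shows "\<exists>v'. adj M w v' \<and> f $ v' \<noteq> 0 \<and> (M $ w $ v * f $ v) * (M $ w $ v' * f $ v') < 0"
proof (rule ccontr)
  assume H: "\<not> ?thesis"
  define t where "t y = M $ w $ y * f $ y" for y
  have tv: "t v \<noteq> 0" using a n by (auto simp: t_def adj_def)
  have nn: "t v * t y \<ge> 0" for y
  proof (rule ccontr)
    assume "\<not> t v * t y \<ge> 0"
    then have neg: "t v * t y < 0" by simp
    then have "t y \<noteq> 0" by auto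
    then have "adj M w y" "f $ y \<noteq> 0" using fw by (auto simp: t_def adj_def)
    then show False using H neg by (auto simp: t_def)
  qed
  have s1: "(\<Sum>y\<in>UNIV. t y) = 0"
    using arg_cong[OF eig, of "\<lambda>u. u $ w"] fw by (simp add: mv_comp t_def)
  have "t v * t v \<le> (\<Sum>y\<in>UNIV. t v * t y)" by (rule member_le_sum) (auto intro: nn)
  also have "\<dots> = t v * (\<Sum>y\<in>UNIV. t y)" by (simp add: sum_distrib_left)
  finally have le: "t v * t v \<le> t v * (\<Sum>y\<in>UNIV. t y)" .
  have "t v * t v \<le> 0" using le unfolding s1 by simp
  then show False using tv not_real_square_gt_zero by fastforce
qed

lemma W_path:
  fixes M :: "real^'n^'n"
  assumes symm: "transpose M = M" and eig: "M *v f = l *\<^sub>R f"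
    and g: "g \<in> Sp f (walk_rel (W_walk M f) f)" and geig: "M *v g = l *\<^sub>R g"
    and adjeq: "\<And>x y. f $ x \<noteq> 0 \<Longrightarrow> f $ y \<noteq> 0 \<Longrightarrow> adj M x y \<Longrightarrow> g $ x / f $ x = g $ y / f $ y"
    and path: "(adj M)\<^sup>*\<^sup>* x v" and nz: "f $ x \<noteq> 0" "f $ v \<noteq> 0"
  shows "g $ x / f $ x = g $ v / f $ v"
proof -
  define A where "A y = g $ y / f $ y" for y
  define Inv where "Inv v \<longleftrightarrow> (f $ v \<noteq> 0 \<longrightarrow> A v = A x) \<and>
     (f $ v = 0 \<longrightarrow> (\<forall>s. s = 1 \<or> s = -1 \<longrightarrow> (\<exists>u. f $ u \<noteq> 0 \<and> A u = A x \<and> CH M f u v s)))" for v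
  have "Inv v" using path
  proof (induction rule: rtranclp_induct)
    case base
    then show ?case using nz by (simp add: Inv_def)
  next
    case (step v w)
    note IH = step.IH[unfolded Inv_def]
    have vw: "adj M v w" by fact
    have wv: "adj M w v" using vw adj_sym[OF symm] by simp
    have spm: "sgn_edge M v w = 1 \<or> sgn_edge M v w = -1" by (rule sgn_edge_cases[OF vw])
    show ?case
    proof (cases "f $ v = 0")
      case fv: False
      show ?thesis
      proof (cases "f $ w = 0")
        case fw: False
        then show ?thesis using adjeq[OF fv fw vw] IH fv by (simp add: Inv_def A_def)
      next
        case fw: True
        define e where "e = (if f $ v > 0 then 1 else (-1::real))"
        have e: "e = 1 \<or> e = -1" "e * f $ v > 0" using fv by (auto simp: e_def)
        have c1: "CH M f v w (e * sgn_edge M v w)" by (rule CH_base[OF vw fw e])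
        obtain v' where v': "adj M w v'" "f $ v' \<noteq> 0"
          "(M $ w $ v * f $ v) * (M $ w $ v' * f $ v') < 0"
          using opposite_nb[OF eig fw wv fv] by blast
        have Av': "A v' = A v" using zero_vertex[OF symm eig g geig fw v'(1) wv v'(2) fv] by (simp add: A_def)
        have v'w: "adj M v' w" using v'(1) adj_sym[OF symm] by simp
        define e' where "e' = (if f $ v' > 0 then 1 else (-1::real))"
        have e': "e' = 1 \<or> e' = -1" "e' * f $ v' > 0" using v'(2) by (auto simp: e'_def)
        have c2: "CH M f v' w (e' * sgn_edge M v' w)" by (rule CH_base[OF v'w fw e'])
        have spm': "sgn_edge M v' w = 1 \<or> sgn_edge M v' w = -1" by (rule sgn_edge_cases[OF v'w])
        have Mn: "M $ w $ v \<noteq> 0" "M $ w $ v' \<noteq> 0" using wv v'(1) by (auto simp: adj_def)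
        have prod_neg: "(e * sgn_edge M v w) * (e' * sgn_edge M v' w) < 0"
        proof -
          have "(e * f $ v * (e' * f $ v')) * ((M $ w $ v * f $ v) * (M $ w $ v' * f $ v')) < 0"
            using mult_pos_neg[OF mult_pos_pos[OF e(2) e'(2)] v'(3)] .
          then have "(e * e' * M $ w $ v * M $ w $ v') * (f $ v * f $ v')^2 < 0"
            by (simp add: power2_eq_square mult_ac)
          then have neg: "e * e' * M $ w $ v * M $ w $ v' < 0"
            by (simp add: mult_less_0_iff)
          have "(e * sgn_edge M v w) * (e' * sgn_edge M v' w)
              = (e * e' * M $ w $ v * M $ w $ v') / (\<bar>M $ w $ v\<bar> * \<bar>M $ w $ v'\<bar>)"
            using sgn_edge_sym[OF symm, of v w] sgn_edge_sym[OF symm, of v' w]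
            by (simp add: sgn_edge_eq field_simps)
          also have "\<dots> < 0" using neg Mn by (simp add: divide_less_0_iff)
          finally show ?thesis .
        qed
        have "\<exists>u. f $ u \<noteq> 0 \<and> A u = A x \<and> CH M f u w s" if s: "s = 1 \<or> s = -1" for s
        proof (cases "s = e * sgn_edge M v w")
          case True
          then show ?thesis using c1 fv IH by blast
        next
          case False
          then have "s = e' * sgn_edge M v' w" using s e e' spm spm' prod_neg by auto
          then show ?thesis using c2 v'(2) Av' IH fv by auto
        qed
        then show ?thesis using fw by (simp add: Inv_def)
      qed
    next
      case fv: True
      show ?thesis
      proof (cases "f $ w = 0")
        case fw: True
        have "\<exists>u. f $ u \<noteq> 0 \<and> A u = A x \<and> CH M f u w s" if s: "s = 1 \<or> s = -1" for s
        proof -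
          have "s * sgn_edge M v w = 1 \<or> s * sgn_edge M v w = -1" using s spm by auto
          then obtain u where u: "f $ u \<noteq> 0" "A u = A x" "CH M f u v (s * sgn_edge M v w)"
            using IH fv by blast
          have "CH M f u w (s * sgn_edge M v w * sgn_edge M v w)"
            by (rule CH_ext[OF u(3) vw fv]) (use fw in simp)
          then show ?thesis using u sgn_sq[OF vw] by (auto simp: mult.assoc)
        qed
        then show ?thesis using fw by (simp add: Inv_def)
      next
        case fw: False
        define s where "s = (if f $ w > 0 then 1 else (-1::real)) * sgn_edge M v w"
        have s: "s = 1 \<or> s = -1" using spm by (auto simp: s_def)
        obtain u where u: "f $ u \<noteq> 0" "A u = A x" "CH M f u v s" using IH fv s by blast
        have pos: "s * sgn_edge M v w * f $ w > 0"
          using sgn_sq[OF vw] fw by (auto simp: s_def mult.assoc)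
        have "CH M f u w (s * sgn_edge M v w)" by (rule CH_ext[OF u(3) vw fv]) (use pos in simp)
        then have "(u, w) \<in> walk_rel (W_walk M f) f" using CH_rel u(1) fw by blast
        then have "A u = A w" using Sp_rel[OF g] u(1) fw by (simp add: A_def)
        then show ?thesis using u fw by (simp add: Inv_def)
      qed
    qed
  qed
  then show ?thesis using nz by (simp add: Inv_def A_def)
qed

theorem theorem4p1:
  fixes M :: "real^'n^'n" and lam :: "nat \<Rightarrow> real" and k :: nat and f :: "real^'n"
  assumes symm: "transpose M = M"
    and sorted: "\<And>i j. 1 \<le> i \<Longrightarrow> i \<le> j \<Longrightarrow> j \<le> CARD('n) \<Longrightarrow> lam i \<le> lam j"
    and mult: "\<And>\<mu>. card {i \<in> {1..CARD('n)}. lam i = \<mu>} = dim (eigenspace M \<mu>)"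
    and k: "1 \<le> k" "k \<le> CARD('n)"
    and f_nz: "f \<noteq> 0"
    and f_eig: "M *v f = lam k *\<^sub>R f"
  shows "strong_nodal_count M f \<le> k + dim (eigenspace M (lam k)) - 1
       \<and> weak_nodal_count M f \<le> k + num_components M - 1
       \<and> (num_components M = 1 \<longrightarrow> weak_nodal_count M f \<le> k)
       \<and> (minimal_support M (lam k) f \<longrightarrow> strong_nodal_count M f \<le> k)"
proof -
  obtain Ugt Uge where U: "subspace Ugt" "subspace Uge"
    "dim Ugt + k + dim (eigenspace M (lam k)) \<ge> CARD('n) + 1"
    "dim Uge + k \<ge> CARD('n) + 1"
    "\<And>g. g \<in> Ugt \<Longrightarrow> g \<noteq> 0 \<Longrightarrow> Qf M (lam k) g > 0"
    "\<And>g. g \<in> Uge \<Longrightarrow> Qf M (lam k) g \<ge> 0"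
    "\<And>g. g \<in> Uge \<Longrightarrow> Qf M (lam k) g = 0 \<Longrightarrow> g \<in> eigenspace M (lam k)"
  proof -
    have s0: "\<forall>i j. 1 \<le> i \<longrightarrow> i \<le> j \<longrightarrow> j \<le> CARD('n) \<longrightarrow> lam i \<le> lam j"
      using sorted by blast
    show ?thesis by (rule spectral[OF symm s0 mult k(1) k(2)]) (rule that)
  qed
  define RS where "RS = walk_rel (S_walk M f) f"
  define RW where "RW = walk_rel (W_walk M f) f"
  define S where "S = Sp f RS"
  define W where "W = Sp f RW"
  have sS: "subspace S" and sW: "subspace W" by (simp_all add: S_def W_def subspace_Sp)
  have cS: "strong_nodal_count M f \<le> dim S"
    unfolding strong_nodal_count_def S_def RS_def by (rule card_le_dim_Sp[OF S_equiv[OF symm]])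
  have cW: "weak_nodal_count M f \<le> dim W"
    unfolding weak_nodal_count_def W_def RW_def by (rule card_le_dim_Sp[OF W_equiv[OF symm]])
  have RSe: "(x, y) \<in> RS" if "adj M x y" "f $ x * sgn_edge M x y * f $ y > 0" for x y
    unfolding RS_def by (rule S_edge[OF that])
  have RWe: "(x, y) \<in> RW" if "adj M x y" "f $ x * sgn_edge M x y * f $ y > 0" for x y
    unfolding RW_def by (rule W_edge[OF that])
  have QS: "Qf M (lam k) g \<le> 0" if "g \<in> S" for g
    by (rule Sp_Q(1)[OF symm f_eig RSe that[unfolded S_def]])
  have QW: "Qf M (lam k) g \<le> 0" if "g \<in> W" for g
    by (rule Sp_Q(1)[OF symm f_eig RWe that[unfolded W_def]])
  have "S \<inter> Ugt \<subseteq> {0}"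
  proof
    fix g assume "g \<in> S \<inter> Ugt"
    then show "g \<in> {0}" using QS U(5) by force
  qed
  then have "dim (S \<inter> Ugt) = 0" by (simp add: dim_eq_0)
  then have "dim S + dim Ugt \<le> CARD('n)" using dim_Int_ge[OF sS U(1)] by linarith
  then have P1: "strong_nodal_count M f \<le> k + dim (eigenspace M (lam k)) - 1"
    using cS U(3) by linarith
  have "W \<inter> Uge \<subseteq> span (cvec f ` (UNIV // crel M))"
  proof
    fix g assume g: "g \<in> W \<inter> Uge"
    have Q0: "Qf M (lam k) g = 0" using QW U(6) g by force
    have ge: "M *v g = lam k *\<^sub>R g" using U(7) g Q0 by (simp add: eigenspace_def)
    have gW0: "g \<in> Sp f RW" using g by (simp add: W_def)
    have gW: "g \<in> Sp f (walk_rel (W_walk M f) f)" using g by (simp add: W_def RW_def)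
    have adjeq: "g $ x / f $ x = g $ y / f $ y"
      if "f $ x \<noteq> 0" "f $ y \<noteq> 0" "adj M x y" for x y
      by (rule Sp_Q(2)[OF symm f_eig RWe gW0 Q0 that])
    show "g \<in> span (cvec f ` (UNIV // crel M))"
    proof (rule comp_span[OF symm])
      show "\<And>x. f $ x = 0 \<Longrightarrow> g $ x = 0" using gW by (auto simp: Sp_def)
      show "\<And>x y. f $ x \<noteq> 0 \<Longrightarrow> f $ y \<noteq> 0 \<Longrightarrow> (adj M)\<^sup>*\<^sup>* x y \<Longrightarrow> g $ x / f $ x = g $ y / f $ y"
        by (rule W_path[OF symm f_eig gW ge adjeq])
    qed
  qed
  then have "dim (W \<inter> Uge) \<le> dim (span (cvec f ` (UNIV // crel M)))"
    by (rule dim_subset)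
  then have "dim (W \<inter> Uge) \<le> num_components M"
    using dim_comp_span[of f M] by linarith
  then have "dim W + dim Uge \<le> CARD('n) + num_components M"
    using dim_Int_ge[OF sW U(2)] by linarith
  then have P2: "weak_nodal_count M f \<le> k + num_components M - 1"
    using cW U(4) by linarith
  have P4: "strong_nodal_count M f \<le> k" if ms: "minimal_support M (lam k) f"
  proof (rule ccontr)
    assume "\<not> strong_nodal_count M f \<le> k"
    then have "dim S \<ge> k + 1" using cS by linarith
    then have d2: "dim (S \<inter> Uge) \<ge> 2" using dim_Int_ge[OF sS U(2)] U(4) by linarith
    have sSU: "subspace (S \<inter> Uge)" using sS U(2) by (simp add: subspace_inter)
    obtain B where B: "B \<subseteq> S \<inter> Uge" "independent B" "S \<inter> Uge \<subseteq> span B" "card B = dim (S \<inter> Uge)"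
      using basis_exists by blast
    have cB: "card B \<ge> 2" using B(4) d2 by simp
    then have fB: "finite B" by (intro card_ge_0_finite) simp
    have "B \<noteq> {}" using cB by auto
    then obtain u where u: "u \<in> B" by blast
    have "card (B - {u}) \<ge> 1" using cB fB u by simp
    then have "B - {u} \<noteq> {}" by (metis card.empty not_one_le_zero)
    then obtain v where v: "v \<in> B" "v \<noteq> u" by blast
    have uv: "u \<in> B" "v \<in> B" "u \<noteq> v" using u v by auto
    have u0: "u \<noteq> 0" using B(2) uv(1) dependent_zero by blast
    have vspan: "v \<notin> span {u}"
    proof
      assume "v \<in> span {u}"
      moreover have "{u} \<subseteq> B - {v}" using uv by auto
      ultimately have "v \<in> span (B - {v})" using span_mono by blast
      then show False using B(2) uv(2) unfolding dependent_def by blast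
    qed
    obtain x0 where x0: "f $ x0 \<noteq> 0" using f_nz by (metis vec_eq_iff zero_index)
    obtain h where h: "h \<in> S \<inter> Uge" "h \<noteq> 0" "h $ x0 = 0"
    proof (cases "u $ x0 = 0")
      case True
      then show ?thesis using that[of u] uv B(1) u0 by blast
    next
      case False
      define h where "h = v - (v $ x0 / u $ x0) *\<^sub>R u"
      have uS: "u \<in> S \<inter> Uge" "v \<in> S \<inter> Uge" using uv B(1) by auto
      have "h \<in> S \<inter> Uge" unfolding h_def
        by (rule subspace_diff[OF sSU uS(2) subspace_scale[OF sSU uS(1)]])
      moreover have "h \<noteq> 0"
      proof
        assume "h = 0"
        then have "v = (v $ x0 / u $ x0) *\<^sub>R u" by (simp add: h_def)
        moreover have "(v $ x0 / u $ x0) *\<^sub>R u \<in> span {u}"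
          by (rule span_scale) (simp add: span_base)
        ultimately have "v \<in> span {u}" by simp
        then show False using vspan by simp
      qed
      moreover have "h $ x0 = 0" using False by (simp add: h_def)
      ultimately show ?thesis using that by blast
    qed
    have "Qf M (lam k) h \<le> 0" using QS h(1) by simp
    moreover have "Qf M (lam k) h \<ge> 0" using U(6) h(1) by simp
    ultimately have "Qf M (lam k) h = 0" by simp
    then have "h \<in> eigenspace M (lam k)" using U(7) h(1) by simp
    then have heig: "M *v h = lam k *\<^sub>R h" by (simp add: eigenspace_def)
    have hsupp: "supp h \<subseteq> supp f"
      using h(1) by (auto simp: S_def Sp_def supp_def)
    have "supp h = supp f" using ms heig hsupp h(2) by (auto simp: minimal_support_def)
    then show False using x0 h(3) by (auto simp: supp_def)
  qed
  show ?thesis using P1 P2 P4 by auto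
qed

end
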